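(* Let $\phi$ be a pure state not in the output free set $\mathcal F'$, in a convex resource theory, and let $\rho$ be any input state. For any $\varepsilon$ satisfying $\varepsilon\ge\left(\frac{\Omega_{\mathcal F}(\rho)}{R^{\mathcal F'}_{\mathcal F'}(\phi)-1}+1\right)^{-1}$, there exists a resource--non-generating probabilistic transformation $\rho\to\tau_\varepsilon$ where $\tau_\varepsilon$ is a state with $F(\tau_\varepsilon,\phi)\ge1-\varepsilon$. If the resource theory is affine, the same conclusion holds for any $\varepsilon$ satisfying $\varepsilon\ge\left(\frac{\Omega_{\mathcal F}(\rho)}{R_{\mathcal F'}(\phi)-1}+1\right)^{-1}$.
   Context: Finite dimensions; $A\le B$ means $B-A\ge0$. Each space carries a closed convex set $\mathcal F$ of free density operators; "affine" means additionally $\mathcal F=\mathrm{aff}(\mathcal F)\cap\mathcal D$ on each space. $\mathrm{cone}(\mathcal F)=\{\lambda\sigma:\lambda\ge0,\sigma\in\mathcal F\}$, $A\le_{\mathcal F}B$ iff $B-A\in\mathrm{cone}(\mathcal F)$. $R_{\max}(X\|Y)=\inf\{\lambda:X\le\lambda Y\}$, $R^{\mathcal F}_{\max}(X\|Y)=\inf\{\lambda:X\le_{\mathcal F}\lambda Y\}$; conventions $\inf\emptyset=\infty$, $c/\infty=0$, $0^{-1}=\infty$, $\infty^{-1}=0$. $R_{\mathcal F}(\rho)=\min_{\sigma\in\mathcal F}R_{\max}(\rho\|\sigma)$, $R^{\mathcal F}_{\mathcal F}(\rho)=\min_{\sigma\in\mathcal F}R^{\mathcal F}_{\max}(\rho\|\sigma)$,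 $\Omega_{\mathcal F}(\rho)=\inf_{\sigma\in\mathcal F}R_{\max}(\rho\|\sigma)R_{\max}(\sigma\|\rho)$. Fidelity $F(\rho,\sigma)=\|\sqrt\rho\sqrt\sigma\|_1^2$. $\mathbb O$: completely positive trace-non-increasing maps $\mathcal E$ such that for every $\sigma\in\mathcal F$ there exist $\sigma'\in\mathcal F'$ and $p\in[0,1]$ with $\mathcal E(\sigma)=p\sigma'$. A probabilistic transformation $\rho\to\tau$ exists iff $\tau$ lies in the closure of $\{\mathcal E(\rho)/\mathrm{Tr}\,\mathcal E(\rho):\mathcal E\in\mathbb O,\ \mathrm{Tr}\,\mathcal E(\rho)>0\}$. *)

theory Defs
  imports "HOL-Analysis.Analysis" "HOL-Library.Extended_Real"
begin

definition adj :: "complex^'n^'m \<Rightarrow> complex^'m^'n" where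
  "adj A = (\<chi> i j. cnj (A $ j $ i))"

definition qform :: "complex^'n^'n \<Rightarrow> complex^'n \<Rightarrow> complex" where
  "qform A x = (\<Sum>i\<in>UNIV. \<Sum>j\<in>UNIV. cnj (x $ i) * A $ i $ j * x $ j)"

definition psd :: "complex^'n^'n \<Rightarrow> bool" where
  "psd A \<longleftrightarrow> (\<forall>x. Im (qform A x) = 0 \<and> Re (qform A x) \<ge> 0)"

definition loewner_le :: "complex^'n^'n \<Rightarrow> complex^'n^'n \<Rightarrow> bool" where
  "loewner_le A B \<longleftrightarrow> psd (B - A)"

definition density :: "complex^'n^'n \<Rightarrow> bool" where
  "density \<rho> \<longleftrightarrow> psd \<rho> \<and> trace \<rho> = 1"

definition outer :: "complex^'n \<Rightarrow> complex^'n^'n" where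
  "outer v = (\<chi> i j. v $ i * cnj (v $ j))"

definition pure_state :: "complex^'n^'n \<Rightarrow> bool" where
  "pure_state \<phi> \<longleftrightarrow> density \<phi> \<and> (\<exists>v. \<phi> = outer v)"

definition msqrt :: "complex^'n^'n \<Rightarrow> complex^'n^'n" where
  "msqrt A = (THE B. psd B \<and> B ** B = A)"

definition trace_norm :: "complex^'n^'n \<Rightarrow> real" where
  "trace_norm M = Re (trace (msqrt (adj M ** M)))"

definition fidelity :: "complex^'n^'n \<Rightarrow> complex^'n^'n \<Rightarrow> real" where
  "fidelity \<rho> \<sigma> = (trace_norm (msqrt \<rho> ** msqrt \<sigma>))\<^sup>2"

definition free_set :: "(complex^'n^'n) set \<Rightarrow> bool" where
  "free_set F \<longleftrightarrow> F \<noteq> {} \<and> closed F \<and> convex F \<and> (\<forall>\<sigma>\<in>F. density \<sigma>)"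

definition affine_free :: "(complex^'n^'n) set \<Rightarrow> bool" where
  "affine_free F \<longleftrightarrow> F = (affine hull F) \<inter> {\<sigma>. density \<sigma>}"

definition free_cone :: "(complex^'n^'n) set \<Rightarrow> (complex^'n^'n) set" where
  "free_cone F = {c *\<^sub>R \<sigma> | c \<sigma>. c \<ge> 0 \<and> \<sigma> \<in> F}"

definition free_le :: "(complex^'n^'n) set \<Rightarrow> complex^'n^'n \<Rightarrow> complex^'n^'n \<Rightarrow> bool" where
  "free_le F A B \<longleftrightarrow> B - A \<in> free_cone F"

text \<open>Max-relative quantities, valued in the extended reals (Inf {} = \<infinity>).\<close>
definition Rmax :: "complex^'n^'n \<Rightarrow> complex^'n^'n \<Rightarrow> ereal" where
  "Rmax X Y = Inf {ereal l | l. loewner_le X (l *\<^sub>R Y)}"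

definition RmaxF :: "(complex^'n^'n) set \<Rightarrow> complex^'n^'n \<Rightarrow> complex^'n^'n \<Rightarrow> ereal" where
  "RmaxF F X Y = Inf {ereal l | l. free_le F X (l *\<^sub>R Y)}"

text \<open>Generalized robustness R_F and standard robustness R^F_F (minimum over F,
  written as an infimum).\<close>
definition gen_robustness :: "(complex^'n^'n) set \<Rightarrow> complex^'n^'n \<Rightarrow> ereal" where
  "gen_robustness F \<rho> = (INF \<sigma>\<in>F. Rmax \<rho> \<sigma>)"

definition std_robustness :: "(complex^'n^'n) set \<Rightarrow> complex^'n^'n \<Rightarrow> ereal" where
  "std_robustness F \<rho> = (INF \<sigma>\<in>F. RmaxF F \<rho> \<sigma>)"

definition Omega :: "(complex^'n^'n) set \<Rightarrow> complex^'n^'n \<Rightarrow> ereal" where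
  "Omega F \<rho> = (INF \<sigma>\<in>F. Rmax \<rho> \<sigma> * Rmax \<sigma> \<rho>)"

text \<open>A block operator on C^k \<otimes> H is given by its
  k\<times>k family of blocks X i j; positivity of it is the quadratic-form condition
  written out; (id_k \<otimes> E) acts blockwise.\<close>
definition block_psd :: "nat \<Rightarrow> (nat \<Rightarrow> nat \<Rightarrow> complex^'n^'n) \<Rightarrow> bool" where
  "block_psd k X \<longleftrightarrow> (\<forall>x :: nat \<Rightarrow> complex^'n.
     (let q = (\<Sum>i<k. \<Sum>j<k. \<Sum>a\<in>UNIV. \<Sum>b\<in>UNIV.
                 cnj (x i $ a) * X i j $ a $ b * x j $ b)
      in Im q = 0 \<and> Re q \<ge> 0))"

definition cscale :: "complex \<Rightarrow> complex^'n^'m \<Rightarrow> complex^'n^'m" where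
  "cscale c A = (\<chi> i j. c * A $ i $ j)"

definition clinear_map :: "(complex^'n^'n \<Rightarrow> complex^'m^'m) \<Rightarrow> bool" where
  "clinear_map E \<longleftrightarrow> (\<forall>X Y. E (X + Y) = E X + E Y) \<and> (\<forall>c X. E (cscale c X) = cscale c (E X))"

definition completely_positive :: "(complex^'n^'n \<Rightarrow> complex^'m^'m) \<Rightarrow> bool" where
  "completely_positive E \<longleftrightarrow> clinear_map E \<and>
     (\<forall>k X. block_psd k X \<longrightarrow> block_psd k (\<lambda>i j. E (X i j)))"

definition trace_nonincreasing :: "(complex^'n^'n \<Rightarrow> complex^'m^'m) \<Rightarrow> bool" where
  "trace_nonincreasing E \<longleftrightarrow> (\<forall>X. psd X \<longrightarrow> Re (trace (E X)) \<le> Re (trace X))"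

definition RNG_ops :: "(complex^'n^'n) set \<Rightarrow> (complex^'m^'m) set
    \<Rightarrow> (complex^'n^'n \<Rightarrow> complex^'m^'m) set" where
  "RNG_ops F F' = {E. completely_positive E \<and> trace_nonincreasing E \<and>
     (\<forall>\<sigma>\<in>F. \<exists>\<sigma>'\<in>F'. \<exists>p. 0 \<le> p \<and> p \<le> 1 \<and> E \<sigma> = p *\<^sub>R \<sigma>')}"

definition prob_transform :: "(complex^'n^'n) set \<Rightarrow> (complex^'m^'m) set
    \<Rightarrow> complex^'n^'n \<Rightarrow> complex^'m^'m \<Rightarrow> bool" where
  "prob_transform F F' \<rho> \<tau> \<longleftrightarrow>
     \<tau> \<in> closure {(1 / Re (trace (E \<rho>))) *\<^sub>R E \<rho> | E.
                    E \<in> RNG_ops F F' \<and> Re (trace (E \<rho>)) > 0}"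

text \<open>The threshold (\<Omega>/(R - 1) + 1)^(-1), with c/\<infinity> = 0, 0^(-1) = \<infinity>, \<infinity>^(-1) = 0
  (division written as multiplication by inverse in ereal).\<close>
definition eps_threshold :: "ereal \<Rightarrow> ereal \<Rightarrow> ereal" where
  "eps_threshold \<Omega> R = inverse (\<Omega> * inverse (R - 1) + 1)"

lemma "inverse (0::ereal) = \<infinity>" "inverse (\<infinity>::ereal) = 0" "(c::ereal) * inverse \<infinity> = 0"
    "(\<infinity>::ereal) * inverse \<infinity> = 0"
  by (simp_all add: zero_ereal_def[symmetric])

end

theory Submission
  imports Defs
begin

definition cinner :: "complex^'n \<Rightarrow> complex^'n \<Rightarrow> complex" where
  "cinner x y = (\<Sum>i\<in>UNIV. cnj (x$i) * y$i)"

definition herm :: "complex^'n^'n \<Rightarrow> bool" where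
  "herm A \<longleftrightarrow> (\<forall>i j. A$i$j = cnj (A$j$i))"

lemma cinner_add_right: "cinner x (y + z) = cinner x y + cinner x z"
  by (simp add: cinner_def distrib_left sum.distrib)
lemma cinner_add_left: "cinner (x + y) z = cinner x z + cinner y z"
  by (simp add: cinner_def distrib_right sum.distrib)
lemma cinner_diff_right: "cinner x (y - z) = cinner x y - cinner x z"
  by (simp add: cinner_def right_diff_distrib sum_subtractf)
lemma cinner_diff_left: "cinner (x - y) z = cinner x z - cinner y z"
  by (simp add: cinner_def left_diff_distrib sum_subtractf)
lemma cinner_scale_right: "cinner x (c *s y) = c * cinner x y"
  by (simp add: cinner_def sum_distrib_left mult_ac)
lemma cinner_scale_left: "cinner (c *s x) y = cnj c * cinner x y"
  by (simp add: cinner_def sum_distrib_left mult_ac)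
lemma cinner_sum_right: "cinner x (\<Sum>u\<in>U. f u) = (\<Sum>u\<in>U. cinner x (f u))"
  by (simp add: cinner_def sum_component sum_distrib_left) (rule sum.swap)
lemma cinner_sum_left: "cinner (\<Sum>u\<in>U. f u) x = (\<Sum>u\<in>U. cinner (f u) x)"
  by (simp add: cinner_def sum_component sum_distrib_right) (rule sum.swap)
lemma cinner_zero_right[simp]: "cinner x 0 = 0" by (simp add: cinner_def)
lemma cinner_zero_left[simp]: "cinner 0 x = 0" by (simp add: cinner_def)
lemma cinner_commute: "cinner y x = cnj (cinner x y)"
  by (simp add: cinner_def mult.commute)

lemma cnj_mult_self: "cnj z * z = complex_of_real ((cmod z)^2)"
  by (metis complex_norm_square mult.commute)

lemma cinner_self: "cinner x x = complex_of_real ((norm x)^2)"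
proof -
  have "cinner x x = (\<Sum>i\<in>UNIV. complex_of_real ((cmod (x$i))^2))"
    unfolding cinner_def by (simp add: cnj_mult_self)
  also have "\<dots> = complex_of_real (\<Sum>i\<in>UNIV. (cmod (x$i))^2)" by simp
  also have "(\<Sum>i\<in>UNIV. (cmod (x$i))^2) = (norm x)^2"
    by (simp add: norm_vec_def L2_set_def sum_nonneg)
  finally show ?thesis .
qed

lemma cinner_self_eq_0: "cinner x x = 0 \<longleftrightarrow> x = 0"
  by (simp add: cinner_self)

lemma qform_cinner: "qform A x = cinner x (A *v x)"
  by (simp add: qform_def cinner_def matrix_vector_mult_def sum_distrib_left mult_ac)

lemma herm_cinner:
  assumes "herm A" shows "cinner x (A *v y) = cinner (A *v x) y"
proof -
  have c: "cnj (A$j$i) = A$i$j" for i j using assms unfolding herm_def by (metis complex_cnj_cnj)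
  have "cinner x (A *v y) = (\<Sum>i\<in>UNIV. \<Sum>j\<in>UNIV. cnj (x$i) * A$i$j * y$j)"
    by (simp add: cinner_def matrix_vector_mult_def sum_distrib_left mult.assoc)
  also have "\<dots> = (\<Sum>j\<in>UNIV. \<Sum>i\<in>UNIV. cnj (x$i) * A$i$j * y$j)"
    by (rule sum.swap)
  also have "\<dots> = (\<Sum>j\<in>UNIV. \<Sum>i\<in>UNIV. cnj (A$j$i) * cnj (x$i) * y$j)"
    by (simp only: c mult.commute)
  also have "\<dots> = cinner (A *v x) y"
    by (simp add: cinner_def matrix_vector_mult_def sum_distrib_right)
  finally show ?thesis .
qed

lemma herm_qform_real: "herm A \<Longrightarrow> Im (qform A x) = 0"
proof -
  assume h: "herm A"
  have "qform A x = cnj (qform A x)"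
    by (metis cinner_commute h herm_cinner qform_cinner)
  then show ?thesis by (metis Reals_cnj_iff complex_is_Real_iff)
qed

lemma mv_axis: "(A *v axis j c) $ i = A$i$j * c"
  by (simp add: matrix_vector_mult_def axis_def if_distrib if_distribR cong: if_cong)
lemma mv_add: "A *v (x + y) = A *v x + A *v y"
  by (simp add: matrix_vector_right_distrib)
lemma mv_scale: "(A::complex^'n^'m) *v (c *s x) = c *s (A *v x)"
proof -
  have e: "A$i$j * (c * x$j) = c * (A$i$j * x$j)" for i j by (simp add: algebra_simps)
  show ?thesis by (simp only: vec_eq_iff matrix_vector_mult_def sum_distrib_left e vec_lambda_beta
     vector_smult_component) simp
qed
lemma cinner_axis_left: "cinner (axis i 1) y = y$i"
  by (simp add: cinner_def axis_def if_distrib if_distribR cong: if_cong)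

lemma qform_axis: "qform A (axis i 1 + c *s axis j 1) =
   A$i$i + c * A$i$j + cnj c * A$j$i + cnj c * c * A$j$j"
proof -
  have e: "A *v axis k 1 = (\<chi> l. A$l$k)" for k by (simp add: vec_eq_iff mv_axis)
  show ?thesis
    unfolding qform_cinner mv_add mv_scale cinner_add_left cinner_add_right cinner_scale_left
      cinner_scale_right cinner_axis_left e by (simp add: algebra_simps)
qed

lemma psd_herm:
  assumes "psd A" shows "herm A"
  unfolding herm_def
proof (intro allI)
  fix i j
  have im: "Im (qform A x) = 0" for x using assms psd_def by blast
  have d: "Im (A$k$k) = 0" for k using im[of "axis k 1 + 0 *s axis k 1"] unfolding qform_axis by simp
  have 1: "Im (A$i$j + A$j$i) = 0" using im[of "axis i 1 + 1 *s axis j 1"] d[of i] d[of j]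
    unfolding qform_axis by simp
  have 2: "Re (A$i$j - A$j$i) = 0" using im[of "axis i 1 + \<i> *s axis j 1"] d[of i] d[of j]
    unfolding qform_axis by (simp add: algebra_simps)
  show "A$i$j = cnj (A$j$i)" using 1 2 by (simp add: complex_eq_iff)
qed

definition orthonormal :: "(complex^'n) set \<Rightarrow> bool" where
  "orthonormal U \<longleftrightarrow> (\<forall>u\<in>U. cinner u u = 1) \<and> (\<forall>u\<in>U. \<forall>w\<in>U. u \<noteq> w \<longrightarrow> cinner u w = 0)"

definition eigset :: "complex^'n^'n \<Rightarrow> (complex^'n) set \<Rightarrow> bool" where
  "eigset A U \<longleftrightarrow> finite U \<and> orthonormal U \<and> (\<forall>u\<in>U. A *v u = cinner u (A *v u) *s u)"

lemma inner_cinner: "inner x y = Re (cinner x y)"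
  by (simp add: inner_vec_def cinner_def inner_complex_def Re_sum)

lemma orthonormal_card:
  fixes U :: "(complex^'n) set"
  assumes "orthonormal U" shows "finite U \<and> card U \<le> DIM(complex^'n)"
proof -
  have "pairwise orthogonal U"
    using assms unfolding orthonormal_def pairwise_def orthogonal_def inner_cinner by auto
  moreover have "0 \<notin> U" using assms unfolding orthonormal_def by force
  ultimately have "independent U" by (rule pairwise_orthogonal_independent)
  then show ?thesis by (rule independent_bound)
qed

lemma sum_orth:
  assumes "orthonormal U" "finite U" "w \<in> U"
  shows "(\<Sum>u\<in>U. c u * cinner w u) = c w"
proof -
  have "(\<Sum>u\<in>U. c u * cinner w u) = (\<Sum>u\<in>U. if u = w then c u else 0)"
    using assms unfolding orthonormal_def by (intro sum.cong) auto
  also have "\<dots> = c w" using assms by simp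
  finally show ?thesis .
qed

lemma continuous_cinner[continuous_intros]:
  "continuous_on S f \<Longrightarrow> continuous_on S g \<Longrightarrow> continuous_on S (\<lambda>x. cinner (f x) (g x))"
  unfolding cinner_def by (intro continuous_intros)

lemma continuous_mv[continuous_intros]:
  "continuous_on S f \<Longrightarrow> continuous_on S (\<lambda>x. (A::complex^'n^'m) *v f x)"
  unfolding matrix_vector_mult_def
  by (intro continuous_intros continuous_on_vec_lambda)

lemma qform_scale: "qform A (c *s x) = cnj c * c * qform A x"
  unfolding qform_cinner mv_scale cinner_scale_left cinner_scale_right by simp

lemma norm_from_cinner: "cinner w w = 1 \<Longrightarrow> norm w = 1"
proof -
  assume "cinner w w = 1"
  then have "complex_of_real ((norm w)^2) = 1" using cinner_self[of w] by (simp only:)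
  then have "(norm w)^2 = 1" by (simp only: of_real_eq_1_iff)
  then show ?thesis using norm_ge_zero[of w] by (simp add: power2_eq_1_iff)
qed

lemma cinner_real_self: "cinner z z = complex_of_real (Re (cinner z z))"
  by (simp add: cinner_self)

lemma cinner_self_pos: "z \<noteq> 0 \<Longrightarrow> Re (cinner z z) > 0"
  by (simp add: cinner_self)

lemma eig_extend:
  fixes A :: "complex^'n^'n"
  assumes h: "herm A" and e: "eigset A U" and y0: "y \<noteq> 0" and yU: "\<forall>u\<in>U. cinner u y = 0"
  shows "\<exists>w. w \<notin> U \<and> eigset A (insert w U)"
proof -
  define K where "K = {w::complex^'n. cinner w w = 1 \<and> (\<forall>u\<in>U. cinner u w = 0)}"
  have Kc: "compact K"
  proof (subst compact_eq_bounded_closed, rule conjI)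
    show "bounded K" unfolding K_def bounded_iff by (intro exI[of _ 1]) (auto simp: norm_from_cinner)
    have "K = {w. cinner w w = 1} \<inter> (\<Inter>u\<in>U. {w. cinner u w = 0})" unfolding K_def by auto
    moreover have "closed {w::complex^'n. cinner w w = 1}"
      by (intro closed_Collect_eq continuous_intros)
    moreover have "closed {w. cinner u w = 0}" for u
      by (intro closed_Collect_eq continuous_intros)
    ultimately show "closed K" by auto
  qed
  define ny where "ny = Re (cinner y y)"
  have ny: "ny > 0" using y0 cinner_self_pos ny_def by blast
  define y1 where "y1 = complex_of_real (1 / sqrt ny) *s y"
  have "cinner y1 y1 = complex_of_real (1 / sqrt ny) * complex_of_real (1 / sqrt ny) * cinner y y"
    unfolding y1_def cinner_scale_left cinner_scale_right by simp
  also have "\<dots> = 1" using ny by (subst cinner_real_self) (simp add: ny_def[symmetric] field_simps flip: of_real_mult)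
  finally have "y1 \<in> K" using yU unfolding K_def y1_def by (auto simp: cinner_scale_right)
  then have Kne: "K \<noteq> {}" by auto
  define f where "f w = Re (qform A w)" for w
  have fc: "continuous_on K f" unfolding f_def qform_cinner by (intro continuous_intros)
  obtain w0 where w0K: "w0 \<in> K" and w0max: "\<And>t. t \<in> K \<Longrightarrow> f t \<le> f w0"
    using continuous_attains_sup[OF Kc Kne fc] by blast
  have w01: "cinner w0 w0 = 1" and w0U: "\<And>u. u \<in> U \<Longrightarrow> cinner u w0 = 0" using w0K K_def by auto
  define lam where "lam = cinner w0 (A *v w0)"
  define z where "z = A *v w0 - lam *s w0"
  have Aw0: "A *v w0 = z + lam *s w0" unfolding z_def by simp
  have zU: "cinner u z = 0" if "u \<in> U" for u
  proof -
    have "cinner u (A *v w0) = cinner (A *v u) w0" by (rule herm_cinner[OF h])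
    also have "\<dots> = cinner (cinner u (A *v u) *s u) w0" using e that unfolding eigset_def by metis
    also have "\<dots> = 0" using w0U[OF that] by (simp add: cinner_scale_left)
    finally show ?thesis unfolding z_def using w0U[OF that] by (simp add: cinner_diff_right cinner_scale_right)
  qed
  have zw: "cinner w0 z = 0" unfolding z_def lam_def by (simp add: cinner_diff_right cinner_scale_right w01)
  have wz: "cinner z w0 = 0" using zw cinner_commute by (metis complex_cnj_zero)
  have z0: "z = 0"
  proof (rule ccontr)
    assume "z \<noteq> 0"
    define nz where "nz = Re (cinner z z)"
    have nz: "nz > 0" using \<open>z \<noteq> 0\<close> cinner_self_pos nz_def by blast
    have czz: "cinner z z = complex_of_real nz" unfolding nz_def by (rule cinner_real_self)
    have zAw: "cinner z (A *v w0) = complex_of_real nz"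
      unfolding Aw0 by (simp add: cinner_add_right cinner_scale_right wz czz)
    have wAz: "cinner w0 (A *v z) = complex_of_real nz"
      using herm_cinner[OF h, of w0 z] cinner_commute[of "A *v w0" z] zAw by simp
    define D where "D = Re lam * nz - Re (qform A z)"
    define t where "t = nz / (\<bar>D\<bar> + 1)"
    have t0: "t > 0" unfolding t_def using nz by (simp add: add_pos_nonneg)
    have tD: "t * D < nz"
    proof -
      have "t * D \<le> t * \<bar>D\<bar>" using t0 by (simp add: mult_left_mono)
      also have "\<dots> < nz" unfolding t_def using nz by (simp add: field_simps)
      finally show ?thesis .
    qed
    define x where "x = w0 + complex_of_real t *s z"
    have cxx: "cinner x x = complex_of_real (1 + t^2 * nz)"
      unfolding x_def by (simp add: cinner_add_left cinner_add_right cinner_scale_left cinner_scale_right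
          w01 zw wz czz power2_eq_square)
    have qx: "qform A x = lam + complex_of_real (2 * t * nz) + complex_of_real (t^2) * qform A z"
      unfolding x_def qform_cinner mv_add mv_scale
      by (simp add: cinner_add_left cinner_add_right cinner_scale_left cinner_scale_right
          lam_def[symmetric] zAw wAz power2_eq_square algebra_simps)
    define s where "s = 1 / sqrt (1 + t^2 * nz)"
    have pos: "1 + t^2 * nz > 0" using nz by (simp add: add_pos_nonneg)
    have sq: "sqrt (1 + t^2 * nz) * sqrt (1 + t^2 * nz) = 1 + t^2 * nz" using pos by simp
    have ss: "s * s = 1 / (1 + t^2 * nz)" unfolding s_def using sq by simp
    define wt where "wt = complex_of_real s *s x"
    have "cinner wt wt = complex_of_real (s * s * (1 + t^2 * nz))"
      unfolding wt_def cinner_scale_left cinner_scale_right cxx by simp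
    also have "\<dots> = 1" using ss pos by simp
    finally have "wt \<in> K" unfolding K_def wt_def x_def
      by (auto simp: cinner_scale_right cinner_add_right w0U zU)
    then have "f wt \<le> f w0" by (rule w0max)
    moreover have "f wt = s * s * (Re lam + 2 * t * nz + t^2 * Re (qform A z))"
      unfolding f_def wt_def qform_scale qx by simp
    moreover have "f w0 = Re lam" unfolding f_def qform_cinner lam_def by simp
    ultimately have "s * s * (Re lam + 2 * t * nz + t^2 * Re (qform A z)) \<le> Re lam" by simp
    then have "Re lam + 2 * t * nz + t^2 * Re (qform A z) \<le> Re lam * (1 + t^2 * nz)"
      using ss pos by (simp add: field_simps)
    then have "2 * t * nz \<le> t * (t * D)" unfolding D_def by (simp add: algebra_simps power2_eq_square)
    then have "2 * nz \<le> t * D" using t0 by simp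
    then show False using tD nz by simp
  qed
  have eig0: "A *v w0 = cinner w0 (A *v w0) *s w0" using Aw0 z0 lam_def by simp
  have nU: "w0 \<notin> U" using w0U w01 by fastforce
  have eU: "finite U" "\<And>u. u \<in> U \<Longrightarrow> cinner u u = 1"
    "\<And>u w. u \<in> U \<Longrightarrow> w \<in> U \<Longrightarrow> u \<noteq> w \<Longrightarrow> cinner u w = 0"
    "\<And>u. u \<in> U \<Longrightarrow> A *v u = cinner u (A *v u) *s u"
    using e unfolding eigset_def orthonormal_def by auto
  have w0U': "cinner w0 u = 0" if "u \<in> U" for u
    using w0U[OF that] cinner_commute[of w0 u] by simp
  have "eigset A (insert w0 U)"
    unfolding eigset_def orthonormal_def
    using eU w01 w0U w0U' eig0 by auto
  then show ?thesis using nU by blast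
qed

theorem spectral:
  fixes A :: "complex^'n^'n" assumes h: "herm A"
  shows "\<exists>U. eigset A U \<and> (\<forall>x. x = (\<Sum>u\<in>U. cinner u x *s u))"
proof -
  define P where "P k \<longleftrightarrow> (\<exists>U. eigset A U \<and> card U = k)" for k
  have P0: "P 0" unfolding P_def eigset_def orthonormal_def by (intro exI[of _ "{}"]) simp
  have bound: "\<forall>k. P k \<longrightarrow> k \<le> DIM(complex^'n)"
  proof (intro allI impI)
    fix k assume "P k"
    then obtain U where "eigset A U" "card U = k" unfolding P_def by blast
    then show "k \<le> DIM(complex^'n)" using orthonormal_card[of U] unfolding eigset_def by simp
  qed
  obtain k where Pk: "P k" and kmax: "\<forall>k'. P k' \<longrightarrow> k' \<le> k"
    using Nat.ex_has_greatest_nat[OF P0 bound] by blast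
  obtain U where e: "eigset A U" and cU: "card U = k" using Pk P_def by blast
  have fU: "finite U" and oU: "orthonormal U" using e unfolding eigset_def by auto
  have "x = (\<Sum>u\<in>U. cinner u x *s u)" for x
  proof (rule ccontr)
    assume ne: "x \<noteq> (\<Sum>u\<in>U. cinner u x *s u)"
    define y where "y = x - (\<Sum>u\<in>U. cinner u x *s u)"
    have y0: "y \<noteq> 0" using ne y_def by simp
    have "cinner w y = 0" if "w \<in> U" for w
    proof -
      have "cinner w (\<Sum>u\<in>U. cinner u x *s u) = (\<Sum>u\<in>U. cinner u x * cinner w u)"
        by (simp add: cinner_sum_right cinner_scale_right)
      also have "\<dots> = cinner w x" by (rule sum_orth[OF oU fU that])
      finally show ?thesis unfolding y_def by (simp add: cinner_diff_right)
    qed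
    then obtain w where wU: "w \<notin> U" and e2: "eigset A (insert w U)" using eig_extend[OF h e y0] by blast
    have "card (insert w U) = Suc k" using wU fU cU by simp
    then have "P (Suc k)" unfolding P_def using e2 by blast
    then show False using kmax by (metis Suc_n_not_le_n)
  qed
  then show ?thesis using e by blast
qed

definition specmat :: "(complex^'n) set \<Rightarrow> (complex^'n \<Rightarrow> real) \<Rightarrow> complex^'n^'n" where
  "specmat U s = (\<chi> i j. \<Sum>u\<in>U. complex_of_real (s u) * u$i * cnj (u$j))"

lemma specmat_mv: "specmat U s *v x = (\<Sum>u\<in>U. (complex_of_real (s u) * cinner u x) *s u)"
proof -
  have "(specmat U s *v x)$i = (\<Sum>u\<in>U. (complex_of_real (s u) * cinner u x) * u$i)" for i
  proof -
    have "(specmat U s *v x)$i = (\<Sum>j\<in>UNIV. \<Sum>u\<in>U. complex_of_real (s u) * u$i * cnj (u$j) * x$j)"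
      by (simp add: specmat_def matrix_vector_mult_def sum_distrib_right)
    also have "\<dots> = (\<Sum>u\<in>U. \<Sum>j\<in>UNIV. complex_of_real (s u) * u$i * cnj (u$j) * x$j)"
      by (rule sum.swap)
    also have "\<dots> = (\<Sum>u\<in>U. (complex_of_real (s u) * cinner u x) * u$i)"
      by (simp add: cinner_def sum_distrib_left sum_distrib_right mult_ac)
    finally show ?thesis .
  qed
  then show ?thesis by (simp add: vec_eq_iff sum_component)
qed

lemma mv_sum: "(A::complex^'n^'m) *v (\<Sum>u\<in>U. f u) = (\<Sum>u\<in>U. A *v f u)"
  by (induction U rule: infinite_finite_induct) (auto simp: mv_add)

lemma sum_scale_eq: "(\<Sum>u\<in>U. c u *s f u) = (\<Sum>u\<in>U. d u *s f u)" if "\<And>u. u \<in> U \<Longrightarrow> c u = d u"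
  using that by (intro sum.cong) auto

lemma eig_real:
  assumes "herm A" shows "cinner u (A *v u) = complex_of_real (Re (cinner u (A *v u)))"
  using herm_qform_real[OF assms, of u] unfolding qform_cinner by (simp add: complex_eq_iff)

lemma eig_specmat:
  assumes h: "herm A" and e: "eigset A U" and c: "\<forall>x. x = (\<Sum>u\<in>U. cinner u x *s u)"
  shows "A = specmat U (\<lambda>u. Re (cinner u (A *v u)))"
proof (subst matrix_eq, intro allI)
  fix x
  have "A *v x = A *v (\<Sum>u\<in>U. cinner u x *s u)" using c by metis
  also have "\<dots> = (\<Sum>u\<in>U. cinner u x *s (A *v u))" by (simp add: mv_sum mv_scale)
  also have "\<dots> = (\<Sum>u\<in>U. (complex_of_real (Re (cinner u (A *v u))) * cinner u x) *s u)"
  proof (intro sum.cong refl)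
    fix u assume "u \<in> U"
    then have "A *v u = cinner u (A *v u) *s u" using e eigset_def by blast
    then show "cinner u x *s (A *v u) = (complex_of_real (Re (cinner u (A *v u))) * cinner u x) *s u"
      using eig_real[OF h, of u] by (metis mult.commute vector_smult_assoc)
  qed
  also have "\<dots> = specmat U (\<lambda>u. Re (cinner u (A *v u))) *v x" by (simp add: specmat_mv)
  finally show "A *v x = specmat U (\<lambda>u. Re (cinner u (A *v u))) *v x" .
qed

lemma specmat_eig:
  assumes "finite U" "orthonormal U" "w \<in> U"
  shows "specmat U s *v w = complex_of_real (s w) *s w"
proof -
  have "specmat U s *v w = (\<Sum>u\<in>U. (if u = w then complex_of_real (s w) *s w else 0))"
    unfolding specmat_mv using assms unfolding orthonormal_def
    by (intro sum.cong) auto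
  also have "\<dots> = complex_of_real (s w) *s w" using assms by simp
  finally show ?thesis .
qed

lemma specmat_mult:
  assumes "finite U" "orthonormal U"
  shows "specmat U s ** specmat U t = specmat U (\<lambda>u. s u * t u)"
proof (subst matrix_eq, intro allI)
  fix x
  have "(specmat U s ** specmat U t) *v x = specmat U s *v (specmat U t *v x)"
    by (simp add: matrix_vector_mul_assoc)
  also have "\<dots> = (\<Sum>u\<in>U. (complex_of_real (t u) * cinner u x) *s (specmat U s *v u))"
    by (simp add: specmat_mv[of U t] mv_sum mv_scale)
  also have "\<dots> = (\<Sum>u\<in>U. (complex_of_real (s u * t u) * cinner u x) *s u)"
    using specmat_eig[OF assms] by (intro sum.cong refl) (simp add: vector_smult_assoc mult_ac)
  also have "\<dots> = specmat U (\<lambda>u. s u * t u) *v x" by (simp add: specmat_mv)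
  finally show "(specmat U s ** specmat U t) *v x = specmat U (\<lambda>u. s u * t u) *v x" .
qed

lemma specmat_qform:
  "qform (specmat U s) x = (\<Sum>u\<in>U. complex_of_real (s u * (cmod (cinner u x))^2))"
proof -
  have "qform (specmat U s) x = (\<Sum>u\<in>U. (complex_of_real (s u) * cinner u x) * cinner x u)"
    unfolding qform_cinner specmat_mv by (simp add: cinner_sum_right cinner_scale_right)
  also have "\<dots> = (\<Sum>u\<in>U. complex_of_real (s u * (cmod (cinner u x))^2))"
  proof (intro sum.cong refl)
    fix u
    have "cinner u x * cinner x u = complex_of_real ((cmod (cinner u x))^2)"
      using cinner_commute[of x u] complex_norm_square[of "cinner u x"] by simp
    then show "(complex_of_real (s u) * cinner u x) * cinner x u = complex_of_real (s u * (cmod (cinner u x))^2)"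
      by (simp add: mult.assoc)
  qed
  finally show ?thesis .
qed

lemma specmat_psd: "(\<And>u. u \<in> U \<Longrightarrow> s u \<ge> 0) \<Longrightarrow> psd (specmat U s)"
  unfolding psd_def specmat_qform by (auto simp: Im_sum Re_sum intro!: sum_nonneg)

lemma specmat_cong: "(\<And>u. u \<in> U \<Longrightarrow> s u = t u) \<Longrightarrow> specmat U s = specmat U t"
proof -
  assume a: "\<And>u. u \<in> U \<Longrightarrow> s u = t u"
  have "(\<Sum>u\<in>U. complex_of_real (s u) * u$i * cnj (u$j)) = (\<Sum>u\<in>U. complex_of_real (t u) * u$i * cnj (u$j))"
    for i j using a by (intro sum.cong) auto
  then show ?thesis unfolding specmat_def by simp
qed

lemma specmat_zero: "specmat U (\<lambda>u. 0) = 0"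
  by (simp add: specmat_def vec_eq_iff)

lemma psd_sqrt_exists:
  assumes "psd A" shows "\<exists>B. psd B \<and> B ** B = A"
proof -
  have h: "herm A" using assms psd_herm by blast
  obtain U where e: "eigset A U" and c: "\<forall>x. x = (\<Sum>u\<in>U. cinner u x *s u)" using spectral[OF h] by blast
  define lam where "lam u = Re (cinner u (A *v u))" for u
  have A: "A = specmat U lam" unfolding lam_def by (rule eig_specmat[OF h e c])
  have l0: "lam u \<ge> 0" for u using assms unfolding lam_def psd_def qform_cinner by blast
  define B where "B = specmat U (\<lambda>u. sqrt (lam u))"
  have pB: "psd B" unfolding B_def using l0 by (intro specmat_psd) simp
  have fU: "finite U" and oU: "orthonormal U" using e unfolding eigset_def by auto
  have "(\<lambda>u. sqrt (lam u) * sqrt (lam u)) = lam" using l0 by (simp add: fun_eq_iff)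
  then have "B ** B = A" unfolding B_def A using specmat_mult[OF fU oU] by metis
  then show ?thesis using pB by blast
qed

lemma herm_diff: "herm A \<Longrightarrow> herm B \<Longrightarrow> herm (A - B)"
  unfolding herm_def
proof (intro allI)
  fix i j assume a: "\<forall>i j. A$i$j = cnj (A$j$i)" and b: "\<forall>i j. B$i$j = cnj (B$j$i)"
  have a1: "A$i$j = cnj (A$j$i)" and b1: "B$i$j = cnj (B$j$i)" using a b by blast+
  show "(A - B)$i$j = cnj ((A - B)$j$i)" by (simp add: a1 b1)
qed

lemma psd_sqrt_unique:
  assumes B: "psd B" and C: "psd C" and eq: "B ** B = C ** C"
  shows "B = C"
proof -
  have hB: "herm B" and hC: "herm C" using B C psd_herm by auto
  define D where "D = B - C"
  have h: "herm D" unfolding D_def using hB hC herm_diff by blast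
  obtain U where e: "eigset D U" and c: "\<forall>x. x = (\<Sum>u\<in>U. cinner u x *s u)" using spectral[OF h] by blast
  define lam where "lam u = Re (cinner u (D *v u))" for u
  have D: "D = specmat U lam" unfolding lam_def by (rule eig_specmat[OF h e c])
  have l0: "lam u = 0" if u: "u \<in> U" for u
  proof -
    define d where "d = lam u"
    have uu: "cinner u u = 1" using e u unfolding eigset_def orthonormal_def by blast
    have Du0: "D *v u = cinner u (D *v u) *s u" using e u unfolding eigset_def by blast
    have Du: "D *v u = complex_of_real d *s u"
      unfolding d_def lam_def using Du0 eig_real[OF h, of u] by simp
    define b where "b = B *v u"
    define c where "c = C *v u"
    have bc: "b = c + complex_of_real d *s u"
      using Du unfolding b_def c_def D_def by (simp add: matrix_vector_mult_diff_rdistrib diff_eq_eq add.commute)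
    have "cinner b b = cinner u (B *v b)" unfolding b_def by (simp add: herm_cinner[OF hB])
    also have "\<dots> = cinner u ((B ** B) *v u)" unfolding b_def by (simp add: matrix_vector_mul_assoc)
    also have "\<dots> = cinner u ((C ** C) *v u)" using eq by simp
    also have "\<dots> = cinner u (C *v c)" unfolding c_def by (simp add: matrix_vector_mul_assoc)
    also have "\<dots> = cinner c c" unfolding c_def by (simp add: herm_cinner[OF hC])
    finally have bbcc: "cinner b b = cinner c c" .
    define g where "g = Re (cinner u c)"
    have g: "cinner u c = complex_of_real g" unfolding g_def c_def by (rule eig_real[OF hC])
    have g0: "g \<ge> 0" using C unfolding g_def c_def psd_def qform_cinner by blast
    have g': "cinner c u = complex_of_real g" using g cinner_commute[of c u] by simp
    have "cinner b b = cinner c c + complex_of_real (d * (2 * g + d))"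
      unfolding bc by (simp add: cinner_add_left cinner_add_right cinner_scale_left cinner_scale_right
        g g' uu algebra_simps)
    then have "complex_of_real (d * (2 * g + d)) = cinner b b - cinner c c"
      by (simp only: add_diff_cancel_left')
    also have "\<dots> = 0" using bbcc by (simp only: diff_self)
    finally have "complex_of_real (d * (2 * g + d)) = 0" .
    then have "d * (2 * g + d) = 0" by (simp only: of_real_eq_0_iff)
    then have dd: "d = 0 \<or> 2 * g + d = 0" by simp
    have b0: "Re (cinner u b) \<ge> 0" using B unfolding b_def psd_def qform_cinner by blast
    have bg: "Re (cinner u b) = g + d" unfolding bc by (simp add: cinner_add_right cinner_scale_right g uu)
    have "d = 0" using dd
    proof
      assume "2 * g + d = 0" then show "d = 0" using b0 bg g0 by linarith
    qed
    then show ?thesis unfolding d_def .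
  qed
  have "D = specmat U (\<lambda>u. 0)" unfolding D by (rule specmat_cong) (use l0 in blast)
  then have "D = 0" by (simp add: specmat_zero)
  then show ?thesis unfolding D_def by simp
qed

lemma msqrt:
  assumes "psd A" shows "psd (msqrt A)" "msqrt A ** msqrt A = A"
proof -
  obtain B0 where B0: "psd B0" "B0 ** B0 = A" using psd_sqrt_exists[OF assms] by blast
  have ex: "\<exists>!B. psd B \<and> B ** B = A"
  proof (rule ex1I[of _ B0])
    show "psd B0 \<and> B0 ** B0 = A" using B0 by blast
    fix B assume "psd B \<and> B ** B = A"
    then show "B = B0" using psd_sqrt_unique[of B B0] B0 by simp
  qed
  show "psd (msqrt A)" "msqrt A ** msqrt A = A" using theI'[OF ex] unfolding msqrt_def by auto
qed

lemma msqrt_eq: assumes "psd A" "psd B" "B ** B = A" shows "msqrt A = B"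
  using msqrt[OF assms(1)] psd_sqrt_unique[of "msqrt A" B] assms by simp

lemma outer_mv: "outer v *v x = cinner v x *s v"
proof -
  have "(outer v *v x)$i = cinner v x * v$i" for i
    by (simp add: outer_def matrix_vector_mult_def cinner_def sum_distrib_left sum_distrib_right mult_ac)
  then show ?thesis by (simp add: vec_eq_iff)
qed

lemma outer_qform: "qform (outer v) x = complex_of_real ((cmod (cinner v x))^2)"
proof -
  have "qform (outer v) x = cinner v x * cinner x v"
    unfolding qform_cinner outer_mv by (simp add: cinner_scale_right)
  also have "\<dots> = complex_of_real ((cmod (cinner v x))^2)"
    using cinner_commute[of x v] complex_norm_square[of "cinner v x"] by simp
  finally show ?thesis .
qed

lemma outer_psd: "psd (outer v)"
  unfolding psd_def outer_qform by simp

lemma outer_idem: "cinner v v = 1 \<Longrightarrow> outer v ** outer v = outer v"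
  by (subst matrix_eq) (simp add: matrix_vector_mul_assoc[symmetric] outer_mv mv_scale cinner_scale_right)

lemma trace_outer: "trace (outer v) = cinner v v"
  by (simp add: trace_def outer_def cinner_def mult.commute)

lemma cscaleR: "r *\<^sub>R (z::complex) = complex_of_real r * z"
  by (simp add: scaleR_conv_of_real)

lemma mv_scaleR: "((r::real) *\<^sub>R (A::complex^'n^'m)) *v x = complex_of_real r *s (A *v x)"
  by (simp add: vec_eq_iff matrix_vector_mult_def sum_distrib_left cscaleR mult.assoc)

lemma qform_scaleR: "qform ((r::real) *\<^sub>R A) x = complex_of_real r * qform A x"
  unfolding qform_cinner mv_scaleR cinner_scale_right ..

lemma psd_scaleR: "r \<ge> 0 \<Longrightarrow> psd A \<Longrightarrow> psd ((r::real) *\<^sub>R A)"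
  unfolding psd_def qform_scaleR by simp

lemma trace_scaleR: "trace ((r::real) *\<^sub>R (A::complex^'n^'n)) = complex_of_real r * trace A"
  by (simp add: trace_def sum_distrib_left cscaleR)

lemma adj_mult_herm:
  assumes a: "herm A" and b: "herm B"
  shows "adj (A ** B) = B ** A"
proof -
  have "cnj ((A ** B)$j$i) = (B ** A)$i$j" for i j
  proof -
    have a1: "cnj (A$j$k) = A$k$j" and b1: "cnj (B$k$i) = B$i$k" for k
      using a b unfolding herm_def by (metis complex_cnj_cnj)+
    have "cnj ((A ** B)$j$i) = (\<Sum>k\<in>UNIV. cnj (A$j$k) * cnj (B$k$i))"
      by (simp add: matrix_matrix_mult_def)
    also have "\<dots> = (\<Sum>k\<in>UNIV. B$i$k * A$k$j)" by (simp only: a1 b1 mult.commute)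
    also have "\<dots> = (B ** A)$i$j" by (simp add: matrix_matrix_mult_def)
    finally show ?thesis .
  qed
  then show ?thesis by (simp add: adj_def vec_eq_iff)
qed

lemma herm_outer: "herm (outer v)"
  using psd_herm outer_psd by blast


lemma sandwich_outer:
  assumes h: "herm T"
  shows "outer v ** T ** outer v = Re (qform T v) *\<^sub>R outer v"
proof (subst matrix_eq, intro allI)
  fix x
  have "(outer v ** T ** outer v) *v x = cinner v x *s (outer v *v (T *v v))"
    by (simp add: matrix_vector_mul_assoc[symmetric] outer_mv mv_scale)
  also have "\<dots> = (cinner v x * qform T v) *s v"
    by (simp add: outer_mv qform_cinner vector_smult_assoc mult.commute)
  also have "qform T v = complex_of_real (Re (qform T v))"
    using herm_qform_real[OF h, of v] by (simp add: complex_eq_iff)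
  finally show "(outer v ** T ** outer v) *v x = (Re (qform T v) *\<^sub>R outer v) *v x"
    by (simp add: mv_scaleR outer_mv vector_smult_assoc mult.commute)
qed

lemma fidelity_pure:
  assumes t: "density \<tau>" and v: "cinner v v = 1"
  shows "fidelity \<tau> (outer v) = Re (qform \<tau> v)"
proof -
  have pt: "psd \<tau>" using t density_def by blast
  have m1: "msqrt (outer v) = outer v"
    by (rule msqrt_eq[OF outer_psd outer_psd outer_idem[OF v]])
  define S where "S = msqrt \<tau>"
  have pS: "psd S" and SS: "S ** S = \<tau>" using msqrt[OF pt] S_def by auto
  have hS: "herm S" using pS psd_herm by blast
  have ht: "herm \<tau>" using pt psd_herm by blast
  define q where "q = Re (qform \<tau> v)"
  have q0: "q \<ge> 0" using pt unfolding q_def psd_def by blast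
  have "adj (S ** outer v) ** (S ** outer v) = outer v ** S ** (S ** outer v)"
    by (simp add: adj_mult_herm[OF hS herm_outer])
  also have "\<dots> = outer v ** (S ** S) ** outer v" by (simp only: matrix_mul_assoc)
  also have "\<dots> = outer v ** \<tau> ** outer v" by (simp only: SS)
  also have "\<dots> = q *\<^sub>R outer v" unfolding q_def by (rule sandwich_outer[OF ht])
  finally have am: "adj (S ** outer v) ** (S ** outer v) = q *\<^sub>R outer v" .
  have "(sqrt q *\<^sub>R outer v) ** (sqrt q *\<^sub>R outer v) = (sqrt q * sqrt q) *\<^sub>R (outer v ** outer v)"
    by (simp add: matrix_scalar_ac scalar_matrix_assoc[symmetric])
  also have "\<dots> = q *\<^sub>R outer v" using q0 outer_idem[OF v] by simp
  finally have "msqrt (q *\<^sub>R outer v) = sqrt q *\<^sub>R outer v"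
    by (intro msqrt_eq psd_scaleR outer_psd) (use q0 in auto)
  then have "trace_norm (S ** outer v) = sqrt q"
    unfolding trace_norm_def am by (simp add: trace_scaleR trace_outer v)
  then show ?thesis unfolding fidelity_def m1 S_def[symmetric] using q0 by (simp add: q_def)
qed

lemma qform_add: "qform (A + B) x = qform A x + qform B x"
  unfolding qform_cinner by (simp add: matrix_vector_mult_add_rdistrib cinner_add_right)

lemma qform_diff: "qform (A - B) x = qform A x - qform B x"
  unfolding qform_cinner by (simp add: matrix_vector_mult_diff_rdistrib cinner_diff_right)

lemma psd_add: "psd A \<Longrightarrow> psd B \<Longrightarrow> psd (A + B)"
  unfolding psd_def qform_add by simp

lemma psd_0: "psd 0"
  unfolding psd_def qform_cinner by simp

lemma psd_diag: "psd X \<Longrightarrow> Im (X$i$i) = 0 \<and> Re (X$i$i) \<ge> 0"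
proof -
  assume "psd X"
  then have "Im (qform X (axis i 1 + 0 *s axis i 1)) = 0 \<and> Re (qform X (axis i 1 + 0 *s axis i 1)) \<ge> 0"
    unfolding psd_def by blast
  then show ?thesis unfolding qform_axis by simp
qed

lemma psd_trace: "psd X \<Longrightarrow> Im (trace X) = 0 \<and> Re (trace X) \<ge> 0"
  unfolding trace_def using psd_diag by (auto simp: Im_sum Re_sum intro: sum_nonneg)

lemma psd_diag_le_trace: "psd X \<Longrightarrow> Re (X$i$i) \<le> Re (trace X)"
  unfolding trace_def Re_sum using psd_diag by (intro member_le_sum) auto

lemma psd_entry_bound:
  assumes p: "psd X" shows "cmod (X$i$j) \<le> Re (trace X)"
proof (cases "X$i$j = 0")
  case True then show ?thesis using psd_trace[OF p] by simp
next
  case False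
  define w where "w = X$i$j"
  have h: "herm X" using p psd_herm by blast
  have wji: "X$j$i = cnj w" unfolding w_def using h unfolding herm_def by (metis complex_cnj_cnj)
  define c where "c = - cnj w / complex_of_real (cmod w)"
  have nw: "cmod w > 0" using False w_def by simp
  have cw: "c * w = - complex_of_real (cmod w)"
    unfolding c_def using nw by (simp add: field_simps complex_norm_square[symmetric] power2_eq_square mult.commute)
  have ccw: "cnj c * cnj w = - complex_of_real (cmod w)" using cw
    by (metis complex_cnj_complex_of_real complex_cnj_minus complex_cnj_mult)
  have cc: "cnj c * c = 1"
    unfolding c_def using nw by (simp add: field_simps complex_norm_square[symmetric] power2_eq_square)
  have "Re (qform X (axis i 1 + c *s axis j 1)) \<ge> 0" using p psd_def by blast
  then have "Re (X$i$i) + Re (X$j$j) - 2 * cmod w \<ge> 0"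
    unfolding qform_axis w_def[symmetric] wji cw ccw cc by simp
  moreover have "Re (X$i$i) \<le> Re (trace X)" "Re (X$j$j) \<le> Re (trace X)" using psd_diag_le_trace[OF p] by auto
  ultimately show ?thesis unfolding w_def by simp
qed

lemma closed_psd: "closed {X::complex^'n^'n. psd X}"
proof -
  have eq: "{X::complex^'n^'n. psd X} = (\<Inter>x. {X. Im (qform X x) = 0} \<inter> {X. Re (qform X x) \<ge> 0})"
    unfolding psd_def by auto
  have c1: "closed {X::complex^'n^'n. Im (qform X x) = 0}" for x
    unfolding qform_def by (intro closed_Collect_eq continuous_intros)
  have c2: "closed {X::complex^'n^'n. Re (qform X x) \<ge> 0}" for x
    unfolding qform_def by (intro closed_Collect_le continuous_intros)
  have "closed (\<Inter>x. {X::complex^'n^'n. Im (qform X x) = 0} \<inter> {X. Re (qform X x) \<ge> 0})"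
    using c1 c2 by (intro closed_INT ballI closed_Int)
  then show ?thesis using eq by simp
qed

lemma continuous_trace[continuous_intros]: "continuous_on S f \<Longrightarrow> continuous_on S (\<lambda>x. trace (f x :: complex^'n^'n))"
  unfolding trace_def by (intro continuous_intros)

lemma closed_density: "closed {X::complex^'n^'n. density X}"
proof -
  have "{X::complex^'n^'n. density X} = {X. psd X} \<inter> {X. trace X = 1}" unfolding density_def by auto
  moreover have "closed {X::complex^'n^'n. trace X = 1}" by (intro closed_Collect_eq continuous_intros)
  ultimately show ?thesis using closed_psd by auto
qed

lemma norm_le_entries: "norm (X::complex^'n^'n) \<le> (\<Sum>i\<in>UNIV. \<Sum>j\<in>UNIV. cmod (X$i$j))"
proof -
  have "norm X \<le> (\<Sum>i\<in>UNIV. norm (X$i))" unfolding norm_vec_def by (rule L2_set_le_sum) simp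
  also have "\<dots> \<le> (\<Sum>i\<in>UNIV. \<Sum>j\<in>UNIV. cmod (X$i$j))"
  proof (rule sum_mono)
    fix i
    show "norm (X$i) \<le> (\<Sum>j\<in>UNIV. cmod (X$i$j))" unfolding norm_vec_def by (rule L2_set_le_sum) simp
  qed
  finally show ?thesis .
qed

lemma psd_norm_bound: "psd X \<Longrightarrow> norm (X::complex^'n^'n) \<le> real (CARD('n) * CARD('n)) * Re (trace X)"
proof -
  assume p: "psd X"
  have "norm X \<le> (\<Sum>i\<in>(UNIV::'n set). \<Sum>j\<in>(UNIV::'n set). Re (trace X))"
    using norm_le_entries[of X] psd_entry_bound[OF p]
    by (smt (verit, best) sum_mono)
  then show ?thesis by simp
qed

lemma compact_density: "compact {X::complex^'n^'n. density X}"
proof (subst compact_eq_bounded_closed, intro conjI closed_density)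
  show "bounded {X::complex^'n^'n. density X}"
    unfolding bounded_iff
  proof (intro exI ballI)
    fix X :: "complex^'n^'n" assume "X \<in> {X. density X}"
    then have "psd X" "trace X = 1" unfolding density_def by auto
    then show "norm X \<le> real (CARD('n) * CARD('n))" using psd_norm_bound[of X] by simp
  qed
qed

definition posfun :: "complex^'n^'n \<Rightarrow> bool" where
  "posfun H \<longleftrightarrow> (\<forall>X. psd X \<longrightarrow> Im (trace (H ** X)) = 0 \<and> Re (trace (H ** X)) \<ge> 0)"

definition mp :: "complex^'n^'n \<Rightarrow> complex^'n^'n \<Rightarrow> complex^'m^'m \<Rightarrow> complex^'m^'m
    \<Rightarrow> complex^'n^'n \<Rightarrow> complex^'m^'m" where
  "mp Ha Hb P Q X = cscale (trace (Ha ** X)) P + cscale (trace (Hb ** X)) Q"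

lemma cscale_add_left: "cscale (a + b) P = cscale a P + cscale b P"
  by (simp add: cscale_def vec_eq_iff distrib_right)
lemma cscale_add_right: "cscale c (A + B) = cscale c A + cscale c B"
  by (simp add: cscale_def vec_eq_iff distrib_left)
lemma cscale_mult: "cscale (a * b) P = cscale a (cscale b P)"
  by (simp add: cscale_def vec_eq_iff mult.assoc)
lemma mm_cscale: "(H::complex^'n^'m) ** cscale c X = cscale c (H ** X)"
  by (simp add: cscale_def vec_eq_iff matrix_matrix_mult_def sum_distrib_left mult.left_commute)
lemma trace_cscale: "trace (cscale c (M::complex^'n^'n)) = c * trace M"
  by (simp add: cscale_def trace_def sum_distrib_left)
lemma cscale_mv: "cscale c (A::complex^'n^'m) *v w = c *s (A *v w)"
  by (simp add: cscale_def vec_eq_iff matrix_vector_mult_def sum_distrib_left mult.assoc)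
lemma qform_cscale: "qform (cscale c M) u = c * qform M u"
  unfolding qform_cinner cscale_mv cinner_scale_right ..
lemma cscale_real: "cscale (complex_of_real r) M = r *\<^sub>R M"
  by (simp add: cscale_def vec_eq_iff cscaleR)

lemma trace_zero[simp]: "trace (0::'a::semiring_1^'n^'n) = 0"
  by (simp add: trace_def)
lemma qform_zero[simp]: "qform 0 u = 0"
  by (simp add: qform_def)

lemma trace_mult_sum: "trace ((H::complex^'n^'n) ** (\<Sum>t\<in>T. M t)) = (\<Sum>t\<in>T. trace (H ** M t))"
  by (induction T rule: infinite_finite_induct) (auto simp: matrix_add_ldistrib trace_add)

lemma qform_sum: "qform (\<Sum>t\<in>T. M t) u = (\<Sum>t\<in>T. qform (M t) u)"
  by (induction T rule: infinite_finite_induct) (auto simp: qform_add)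

lemma mp_clinear: "clinear_map (mp Ha Hb P Q)"
  unfolding clinear_map_def mp_def
  by (simp add: matrix_add_ldistrib trace_add cscale_add_left mm_cscale trace_cscale cscale_mult
      cscale_add_right)

definition bq :: "nat \<Rightarrow> (nat \<Rightarrow> nat \<Rightarrow> complex^'n^'n) \<Rightarrow> (nat \<Rightarrow> complex^'n) \<Rightarrow> complex" where
  "bq k X x = (\<Sum>i<k. \<Sum>j<k. \<Sum>a\<in>UNIV. \<Sum>b\<in>UNIV. cnj (x i $ a) * X i j $ a $ b * x j $ b)"

lemma block_psd_iff: "block_psd k X \<longleftrightarrow> (\<forall>x. Im (bq k X x) = 0 \<and> Re (bq k X x) \<ge> 0)"
  by (simp add: block_psd_def bq_def Let_def)

lemma cinner_mv_expand: "cinner y (M *v z) = (\<Sum>a\<in>UNIV. \<Sum>b\<in>UNIV. cnj (y $ a) * M $ a $ b * z $ b)"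
  by (simp add: cinner_def matrix_vector_mult_def sum_distrib_left mult.assoc)

lemma bq_cinner: "bq k X x = (\<Sum>i<k. \<Sum>j<k. cinner (x i) (X i j *v x j))"
  unfolding bq_def cinner_mv_expand ..

lemma posblock:
  assumes bp: "block_psd k X" and H: "posfun H" and P: "psd P"
  shows "Im (\<Sum>i<k. \<Sum>j<k. trace (H ** X i j) * cinner (x i) (P *v x j)) = 0 \<and>
         Re (\<Sum>i<k. \<Sum>j<k. trace (H ** X i j) * cinner (x i) (P *v x j)) \<ge> 0"
proof -
  define S where "S = msqrt P"
  have pS: "psd S" and SS: "S ** S = P" using msqrt[OF P] S_def by auto
  have hS: "herm S" using pS psd_herm by blast
  define y where "y i = S *v x i" for i
  have c1: "cinner (x i) (P *v x j) = (\<Sum>g\<in>UNIV. cnj (y i $ g) * y j $ g)" for i j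
  proof -
    have "cinner (x i) (P *v x j) = cinner (x i) (S *v (S *v x j))"
      unfolding SS[symmetric] by (simp add: matrix_vector_mul_assoc)
    also have "\<dots> = cinner (y i) (y j)" unfolding y_def by (rule herm_cinner[OF hS])
    finally show ?thesis unfolding cinner_def .
  qed
  define f where "f i j = trace (H ** X i j)" for i j
  define Z where "Z g = (\<Sum>i<k. \<Sum>j<k. cscale (cnj (y i $ g) * y j $ g) (X i j))" for g
  have "(\<Sum>i<k. \<Sum>j<k. f i j * cinner (x i) (P *v x j))
      = (\<Sum>i<k. \<Sum>j<k. \<Sum>g\<in>UNIV. (cnj (y i $ g) * y j $ g) * f i j)"
    unfolding c1 by (simp add: sum_distrib_left mult.commute)
  also have "\<dots> = (\<Sum>i<k. \<Sum>g\<in>UNIV. \<Sum>j<k. (cnj (y i $ g) * y j $ g) * f i j)"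
    by (intro sum.cong refl) (rule sum.swap)
  also have "\<dots> = (\<Sum>g\<in>UNIV. \<Sum>i<k. \<Sum>j<k. (cnj (y i $ g) * y j $ g) * f i j)"
    by (rule sum.swap)
  also have "\<dots> = (\<Sum>g\<in>UNIV. trace (H ** Z g))"
    unfolding Z_def f_def by (simp add: trace_mult_sum mm_cscale trace_cscale)
  finally have eq: "(\<Sum>i<k. \<Sum>j<k. f i j * cinner (x i) (P *v x j)) = (\<Sum>g\<in>UNIV. trace (H ** Z g))" .
  have pZ: "psd (Z g)" for g
  proof -
    have "qform (Z g) u = bq k X (\<lambda>i. y i $ g *s u)" for u
    proof -
      have "qform (Z g) u = (\<Sum>i<k. \<Sum>j<k. (cnj (y i $ g) * y j $ g) * qform (X i j) u)"
        unfolding Z_def qform_sum qform_cscale ..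
      also have "\<dots> = bq k X (\<lambda>i. y i $ g *s u)"
        unfolding bq_cinner by (simp add: mv_scale cinner_scale_left cinner_scale_right qform_cinner mult.assoc mult.left_commute)
      finally show ?thesis .
    qed
    then show ?thesis using bp unfolding block_psd_iff psd_def by simp
  qed
  have "Im (trace (H ** Z g)) = 0 \<and> Re (trace (H ** Z g)) \<ge> 0" for g
    using H pZ unfolding posfun_def by blast
  then show ?thesis using eq unfolding f_def by (simp add: Im_sum Re_sum sum_nonneg)
qed

lemma mp_block:
  assumes bp: "block_psd k X" and Ha: "posfun Ha" and Hb: "posfun Hb" and P: "psd P" and Q: "psd Q"
  shows "block_psd k (\<lambda>i j. mp Ha Hb P Q (X i j))"
proof -
  have e: "mp Ha Hb P Q M *v w = trace (Ha ** M) *s (P *v w) + trace (Hb ** M) *s (Q *v w)" for M w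
    unfolding mp_def by (simp add: matrix_vector_mult_add_rdistrib cscale_mv)
  have "bq k (\<lambda>i j. mp Ha Hb P Q (X i j)) x =
     (\<Sum>i<k. \<Sum>j<k. trace (Ha ** X i j) * cinner (x i) (P *v x j)) +
     (\<Sum>i<k. \<Sum>j<k. trace (Hb ** X i j) * cinner (x i) (Q *v x j))" for x
    unfolding bq_cinner e by (simp add: cinner_add_right cinner_scale_right sum.distrib)
  then show ?thesis unfolding block_psd_iff using posblock[OF bp Ha P] posblock[OF bp Hb Q] by simp
qed

lemma mp_cp: "posfun Ha \<Longrightarrow> posfun Hb \<Longrightarrow> psd P \<Longrightarrow> psd Q \<Longrightarrow> completely_positive (mp Ha Hb P Q)"
  unfolding completely_positive_def using mp_clinear mp_block by blast

lemma trace_mp: "trace (mp Ha Hb P Q X) = trace (Ha ** X) * trace P + trace (Hb ** X) * trace Q"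
  unfolding mp_def by (simp add: trace_add trace_cscale)

lemma mp_scale: "mp (s *\<^sub>R Ha) (s *\<^sub>R Hb) P Q X = s *\<^sub>R mp Ha Hb P Q X"
proof -
  have "trace ((s *\<^sub>R H) ** X) = complex_of_real s * trace (H ** X)" for H
    by (simp add: scalar_matrix_assoc[symmetric] trace_scaleR)
  then show ?thesis unfolding mp_def
    by (simp add: cscale_mult cscale_real scaleR_add_right)
qed

lemma posfun_scale: "s \<ge> 0 \<Longrightarrow> posfun H \<Longrightarrow> posfun (s *\<^sub>R H)"
  unfolding posfun_def by (simp add: scalar_matrix_assoc[symmetric] trace_scaleR)

lemma trace_mult_bound:
  assumes p: "psd X"
  shows "cmod (trace ((H::complex^'n^'n) ** X)) \<le> (\<Sum>i\<in>UNIV. \<Sum>k\<in>UNIV. cmod (H$i$k)) * Re (trace X)"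
proof -
  have "cmod (trace (H ** X)) = cmod (\<Sum>i\<in>UNIV. \<Sum>k\<in>UNIV. H$i$k * X$k$i)"
    by (simp add: trace_def matrix_matrix_mult_def)
  also have "\<dots> \<le> (\<Sum>i\<in>UNIV. cmod (\<Sum>k\<in>UNIV. H$i$k * X$k$i))" by (rule norm_sum)
  also have "\<dots> \<le> (\<Sum>i\<in>UNIV. \<Sum>k\<in>UNIV. cmod (H$i$k) * Re (trace X))"
  proof (rule sum_mono)
    fix i
    have "cmod (\<Sum>k\<in>UNIV. H$i$k * X$k$i) \<le> (\<Sum>k\<in>UNIV. cmod (H$i$k * X$k$i))" by (rule norm_sum)
    also have "\<dots> \<le> (\<Sum>k\<in>UNIV. cmod (H$i$k) * Re (trace X))"
      by (rule sum_mono) (simp add: norm_mult mult_left_mono psd_entry_bound[OF p])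
    finally show "cmod (\<Sum>k\<in>UNIV. H$i$k * X$k$i) \<le> (\<Sum>k\<in>UNIV. cmod (H$i$k) * Re (trace X))" .
  qed
  also have "\<dots> = (\<Sum>i\<in>UNIV. \<Sum>k\<in>UNIV. cmod (H$i$k)) * Re (trace X)"
    by (simp add: sum_distrib_right)
  finally show ?thesis .
qed

lemma cone_scale: "x \<in> free_cone F \<Longrightarrow> r \<ge> 0 \<Longrightarrow> r *\<^sub>R x \<in> free_cone F"
proof -
  assume x: "x \<in> free_cone F" and r: "r \<ge> 0"
  obtain c s where "x = c *\<^sub>R s" "c \<ge> 0" "s \<in> F" using x free_cone_def by blast
  then have "r *\<^sub>R x = (r * c) *\<^sub>R s" "r * c \<ge> 0" using r by auto
  then show ?thesis unfolding free_cone_def using \<open>s \<in> F\<close> by blast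
qed

lemma cone_zero: "F \<noteq> {} \<Longrightarrow> 0 \<in> free_cone F"
  unfolding free_cone_def by (auto intro!: exI[of _ "0::real"])

lemma cone_add:
  assumes c: "convex F" and x: "x \<in> free_cone F" and y: "y \<in> free_cone F"
  shows "x + y \<in> free_cone F"
proof -
  obtain c1 s1 where 1: "x = c1 *\<^sub>R s1" "c1 \<ge> 0" "s1 \<in> F" using x free_cone_def by blast
  obtain c2 s2 where 2: "y = c2 *\<^sub>R s2" "c2 \<ge> 0" "s2 \<in> F" using y free_cone_def by blast
  show ?thesis
  proof (cases "c1 + c2 = 0")
    case True
    then have "c1 = 0" "c2 = 0" using 1 2 by auto
    then have "x + y = 0 *\<^sub>R s1" using 1 2 by simp
    then show ?thesis unfolding free_cone_def using 1 by blast
  next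
    case False
    then have pos: "c1 + c2 > 0" using 1 2 by simp
    define s where "s = (c1 / (c1 + c2)) *\<^sub>R s1 + (c2 / (c1 + c2)) *\<^sub>R s2"
    have "s \<in> F" unfolding s_def using c 1 2 pos
      by (intro convexD) (auto simp: add_divide_distrib[symmetric])
    moreover have "x + y = (c1 + c2) *\<^sub>R s" unfolding s_def using 1 2 pos
      by (simp add: scaleR_add_right)
    ultimately show ?thesis unfolding free_cone_def using pos by (intro CollectI exI[of _ "c1 + c2"]) auto
  qed
qed

lemma density_psd: "density X \<Longrightarrow> psd X" by (simp add: density_def)

lemma psd_trace_real: "psd X \<Longrightarrow> trace X = complex_of_real (Re (trace X))"
  using psd_trace[of X] by (simp add: complex_eq_iff)

lemma posfun_real: "posfun H \<Longrightarrow> psd X \<Longrightarrow> trace (H ** X) = complex_of_real (Re (trace (H ** X)))"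
  unfolding posfun_def by (simp add: complex_eq_iff)

definition NH :: "complex^'n^'n \<Rightarrow> real" where
  "NH H = (\<Sum>i\<in>UNIV. \<Sum>k\<in>UNIV. cmod (H$i$k))"

lemma NH_nonneg: "NH H \<ge> 0" unfolding NH_def by (intro sum_nonneg) auto

definition outs :: "(complex^'n^'n) set \<Rightarrow> (complex^'m^'m) set \<Rightarrow> complex^'n^'n \<Rightarrow> (complex^'m^'m) set" where
  "outs F F' \<rho> = {(1 / Re (trace (E \<rho>))) *\<^sub>R E \<rho> | E. E \<in> RNG_ops F F' \<and> Re (trace (E \<rho>)) > 0}"

lemma construct:
  fixes F :: "(complex^'n^'n) set" and F' :: "(complex^'m^'m) set"
  assumes fF: "free_set F" and fF': "free_set F'" and rho: "density \<rho>"
    and v: "cinner v v = 1"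
    and Ha: "posfun Ha" and Hb: "posfun Hb"
    and w: "psd \<omega>" and tw: "trace \<omega> = complex_of_real c0" and c0: "c0 \<ge> 0"
    and free: "\<forall>\<sigma>\<in>F. mp Ha Hb (outer v) \<omega> \<sigma> \<in> free_cone F'"
    and apos: "Re (trace (Ha ** \<rho>)) > 0"
  shows "\<exists>\<tau>. \<tau> \<in> outs F F' \<rho> \<and> density \<tau> \<and>
     Re (qform \<tau> v) \<ge> Re (trace (Ha ** \<rho>)) / (Re (trace (Ha ** \<rho>)) + c0 * Re (trace (Hb ** \<rho>)))"
proof -
  define s where "s = 1 / (NH Ha + c0 * NH Hb + 1)"
  have cN: "c0 * NH Hb \<ge> 0" using NH_nonneg[of Hb] c0 by simp
  have den: "NH Ha + c0 * NH Hb + 1 > 0" using NH_nonneg[of Ha] cN by linarith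
  have s0: "s > 0" unfolding s_def using den by simp
  have sN: "s * (NH Ha + c0 * NH Hb) \<le> 1" unfolding s_def using den by (simp add: field_simps)
  define E where "E = mp (s *\<^sub>R Ha) (s *\<^sub>R Hb) (outer v) \<omega>"
  have Ee: "E X = s *\<^sub>R mp Ha Hb (outer v) \<omega> X" for X unfolding E_def by (rule mp_scale)
  have cp: "completely_positive E" unfolding E_def
    using posfun_scale[of s Ha] posfun_scale[of s Hb] s0 Ha Hb outer_psd w by (intro mp_cp) auto
  have trE: "Re (trace (E X)) = s * (Re (trace (Ha ** X)) + c0 * Re (trace (Hb ** X)))" if X: "psd X" for X
  proof -
    have "trace (E X) = complex_of_real s * (trace (Ha ** X) + trace (Hb ** X) * complex_of_real c0)"
      unfolding Ee trace_scaleR trace_mp trace_outer v tw by simp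
    moreover have "trace (Hb ** X) = complex_of_real (Re (trace (Hb ** X)))" by (rule posfun_real[OF Hb X])
    ultimately show ?thesis by (simp add: algebra_simps)
  qed
  have tni: "trace_nonincreasing E" unfolding trace_nonincreasing_def
  proof (intro allI impI)
    fix X :: "complex^'n^'n" assume X: "psd X"
    define T where "T = Re (trace X)"
    have T0: "T \<ge> 0" using psd_trace[OF X] T_def by simp
    have "Re (trace (Ha ** X)) \<le> NH Ha * T"
      using trace_mult_bound[OF X, of Ha] complex_Re_le_cmod[of "trace (Ha ** X)"] unfolding NH_def T_def
      by linarith
    moreover have "Re (trace (Hb ** X)) \<le> NH Hb * T"
      using trace_mult_bound[OF X, of Hb] complex_Re_le_cmod[of "trace (Hb ** X)"] unfolding NH_def T_def
      by linarith
    moreover have "c0 * Re (trace (Hb ** X)) \<le> c0 * (NH Hb * T)" using calculation(2) c0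
      by (rule mult_left_mono)
    ultimately have "Re (trace (Ha ** X)) + c0 * Re (trace (Hb ** X)) \<le> (NH Ha + c0 * NH Hb) * T"
      by (simp add: algebra_simps)
    then have "s * (Re (trace (Ha ** X)) + c0 * Re (trace (Hb ** X))) \<le> s * ((NH Ha + c0 * NH Hb) * T)"
      using s0 by (simp add: mult_left_mono)
    also have "\<dots> = (s * (NH Ha + c0 * NH Hb)) * T" by simp
    also have "\<dots> \<le> 1 * T" using sN T0 by (rule mult_right_mono)
    also have "\<dots> = T" by simp
    finally show "Re (trace (E X)) \<le> Re (trace X)" using trE[OF X] T_def by simp
  qed
  have rng: "E \<in> RNG_ops F F'" unfolding RNG_ops_def
  proof (intro CollectI conjI cp tni ballI)
    fix \<sigma> assume sF: "\<sigma> \<in> F"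
    have sd: "density \<sigma>" using fF sF free_set_def by blast
    have "E \<sigma> \<in> free_cone F'" unfolding Ee using free sF s0 by (intro cone_scale) auto
    then obtain c \<sigma>' where Es: "E \<sigma> = c *\<^sub>R \<sigma>'" and c: "c \<ge> 0" and s'F: "\<sigma>' \<in> F'"
      unfolding free_cone_def by blast
    have "trace \<sigma>' = 1" using fF' s'F free_set_def density_def by blast
    then have "Re (trace (E \<sigma>)) = c" unfolding Es by (simp add: trace_scaleR)
    moreover have "Re (trace (E \<sigma>)) \<le> Re (trace \<sigma>)" using tni sd unfolding trace_nonincreasing_def density_def by blast
    moreover have "trace \<sigma> = 1" using sd density_def by blast
    ultimately have "c \<le> 1" by simp
    then show "\<exists>\<sigma>'\<in>F'. \<exists>p. 0 \<le> p \<and> p \<le> 1 \<and> E \<sigma> = p *\<^sub>R \<sigma>'" using Es c s'F by blast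
  qed
  define a where "a = Re (trace (Ha ** \<rho>))"
  define b where "b = Re (trace (Hb ** \<rho>))"
  have pr: "psd \<rho>" using rho density_def by blast
  have b0: "b \<ge> 0" using Hb pr unfolding b_def posfun_def by blast
  have a0: "a > 0" using apos a_def by simp
  have ab: "a + c0 * b > 0" using a0 b0 c0 by (simp add: add_pos_nonneg)
  have Era: "trace (Ha ** \<rho>) = complex_of_real a" unfolding a_def by (rule posfun_real[OF Ha pr])
  have Erb: "trace (Hb ** \<rho>) = complex_of_real b" unfolding b_def by (rule posfun_real[OF Hb pr])
  have Er: "E \<rho> = s *\<^sub>R (a *\<^sub>R outer v + b *\<^sub>R \<omega>)"
    unfolding Ee mp_def Era Erb cscale_real ..
  have trEr: "Re (trace (E \<rho>)) = s * (a + c0 * b)" using trE[OF pr] unfolding a_def b_def by simp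
  define \<tau> where "\<tau> = (1 / Re (trace (E \<rho>))) *\<^sub>R E \<rho>"
  have tau: "\<tau> = (1 / (a + c0 * b)) *\<^sub>R (a *\<^sub>R outer v + b *\<^sub>R \<omega>)"
  proof -
    have "\<tau> = (1 / (s * (a + c0 * b))) *\<^sub>R (s *\<^sub>R (a *\<^sub>R outer v + b *\<^sub>R \<omega>))"
      unfolding \<tau>_def trEr by (simp only: Er)
    then show ?thesis using s0 by simp
  qed
  have "Re (trace (E \<rho>)) > 0" using trEr s0 ab by simp
  then have "\<tau> \<in> outs F F' \<rho>" unfolding outs_def \<tau>_def using rng by blast
  moreover have "density \<tau>" unfolding density_def
  proof
    show "psd \<tau>" unfolding tau using ab a0 b0 outer_psd w
      by (intro psd_scaleR psd_add) auto
    have "trace \<tau> = complex_of_real (1 / (a + c0 * b)) * (complex_of_real a + complex_of_real b * complex_of_real c0)"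
      unfolding tau by (simp add: trace_scaleR trace_add trace_outer v tw)
    also have "\<dots> = 1" using ab by (simp add: field_simps flip: of_real_mult of_real_add)
    finally show "trace \<tau> = 1" .
  qed
  moreover have "Re (qform \<tau> v) \<ge> a / (a + c0 * b)"
  proof -
    have q1: "qform (outer v) v = 1" unfolding outer_qform v by simp
    have q2: "Re (qform \<omega> v) \<ge> 0" using w psd_def by blast
    have "Re (qform \<tau> v) = (a + b * Re (qform \<omega> v)) / (a + c0 * b)"
      unfolding tau by (simp add: qform_scaleR qform_add q1)
    also have "\<dots> \<ge> a / (a + c0 * b)" using ab b0 q2 by (simp add: divide_right_mono)
    finally show ?thesis .
  qed
  ultimately show ?thesis unfolding a_def b_def by blast
qed

definition hf :: "complex^'n^'n \<Rightarrow> complex^'n^'n" where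
  "hf A = (\<chi> i k. (A$i$k + cnj (A$k$i)) / 2)"

lemma inner_complex_cnj: "inner (x::complex) y = Re (x * cnj y)"
  by (simp add: inner_complex_def)

lemma hf_trace:
  fixes A X :: "complex^'n^'n"
  assumes h: "herm X"
  shows "trace (hf A ** X) = complex_of_real (inner A X)"
proof -
  define S where "S = (\<Sum>i\<in>UNIV. \<Sum>k\<in>UNIV. A$i$k * cnj (X$i$k))"
  have hx: "X$k$i = cnj (X$i$k)" for i k using h unfolding herm_def by blast
  have "trace (hf A ** X) = (\<Sum>i\<in>UNIV. \<Sum>k\<in>UNIV. (A$i$k + cnj (A$k$i)) / 2 * X$k$i)"
    by (simp add: trace_def matrix_matrix_mult_def hf_def)
  also have "\<dots> = (\<Sum>i\<in>UNIV. \<Sum>k\<in>UNIV. A$i$k * X$k$i) / 2 + (\<Sum>i\<in>UNIV. \<Sum>k\<in>UNIV. cnj (A$k$i) * X$k$i) / 2"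
    by (simp add: sum_divide_distrib sum.distrib distrib_right add_divide_distrib)
  also have "(\<Sum>i\<in>UNIV. \<Sum>k\<in>UNIV. A$i$k * X$k$i) = S"
  proof -
    have e: "A$i$k * X$k$i = A$i$k * cnj (X$i$k)" for i k using hx[of k i] by simp
    show ?thesis unfolding S_def by (simp only: e)
  qed
  also have "(\<Sum>i\<in>UNIV. \<Sum>k\<in>UNIV. cnj (A$k$i) * X$k$i) = (\<Sum>k\<in>UNIV. \<Sum>i\<in>UNIV. cnj (A$k$i) * X$k$i)"
    by (rule sum.swap)
  also have "\<dots> = cnj S" unfolding S_def by simp
  also have "S / 2 + cnj S / 2 = complex_of_real (Re S)"
    by (simp add: complex_eq_iff)
  also have "Re S = inner A X"
    unfolding S_def by (simp add: inner_vec_def inner_complex_cnj Re_sum)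
  finally show ?thesis .
qed

lemma hf_posfun:
  fixes A :: "complex^'n^'n"
  assumes "\<forall>P. psd P \<longrightarrow> inner A P \<ge> 0"
  shows "posfun (hf A)"
  unfolding posfun_def
proof (intro allI impI)
  fix X :: "complex^'n^'n" assume "psd X"
  then have "trace (hf A ** X) = complex_of_real (inner A X)" "inner A X \<ge> 0"
    using hf_trace psd_herm assms by auto
  then show "Im (trace (hf A ** X)) = 0 \<and> Re (trace (hf A ** X)) \<ge> 0" by simp
qed

lemma Rmax_ge1:
  assumes "density X" "density Y"
  shows "Rmax X Y \<ge> 1"
  unfolding Rmax_def
proof (rule Inf_greatest, clarify)
  fix l assume "loewner_le X (l *\<^sub>R Y)"
  then have "psd (l *\<^sub>R Y - X)" unfolding loewner_le_def .
  then have "Re (trace (l *\<^sub>R Y - X)) \<ge> 0" using psd_trace by blast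
  then show "1 \<le> ereal l" using assms unfolding density_def by (simp add: trace_sub trace_scaleR)
qed

lemma Rmax_nonneg: "density X \<Longrightarrow> density Y \<Longrightarrow> Rmax X Y \<ge> 0"
proof -
  assume "density X" "density Y"
  then have "1 \<le> Rmax X Y" by (rule Rmax_ge1)
  moreover have "(0::ereal) \<le> 1" by simp
  ultimately show ?thesis by (meson order_trans)
qed

lemma Omega_ge1:
  assumes F: "free_set F" and r: "density \<rho>"
  shows "Omega F \<rho> \<ge> 1"
  unfolding Omega_def
proof (rule INF_greatest)
  fix \<sigma> assume "\<sigma> \<in> F"
  then have s: "density \<sigma>" using F free_set_def by blast
  have "(1::ereal) = 1 * 1" by simp
  also have "\<dots> \<le> Rmax \<rho> \<sigma> * Rmax \<sigma> \<rho>"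
    using Rmax_ge1[OF r s] Rmax_ge1[OF s r] Rmax_nonneg[OF r s] by (intro ereal_mult_mono) auto
  finally show "1 \<le> Rmax \<rho> \<sigma> * Rmax \<sigma> \<rho>" .
qed

lemma Omega_bound:
  assumes F: "free_set F" and r: "density \<rho>" and K: "K \<ge> 0"
    and X: "X \<in> free_cone F" and p1: "psd (X - \<rho>)" and p2: "psd (K *\<^sub>R \<rho> - X)"
  shows "Omega F \<rho> \<le> ereal K"
proof -
  obtain c \<sigma> where Xc: "X = c *\<^sub>R \<sigma>" and c0: "c \<ge> 0" and sF: "\<sigma> \<in> F" using X free_cone_def by blast
  have s: "density \<sigma>" using F sF free_set_def by blast
  have "Re (trace (X - \<rho>)) \<ge> 0" using psd_trace[OF p1] by simp
  then have c1: "c \<ge> 1" using r s unfolding Xc density_def by (simp add: trace_sub trace_scaleR)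
  have "Rmax \<rho> \<sigma> \<le> ereal c" unfolding Rmax_def
    using p1 Xc by (intro Inf_lower) (auto simp: loewner_le_def)
  moreover have "Rmax \<sigma> \<rho> \<le> ereal (K / c)"
  proof -
    have "(K / c) *\<^sub>R \<rho> - \<sigma> = (1 / c) *\<^sub>R (K *\<^sub>R \<rho> - X)" using c1 unfolding Xc
      by (simp add: scaleR_diff_right)
    then have "loewner_le \<sigma> ((K / c) *\<^sub>R \<rho>)" unfolding loewner_le_def
      using psd_scaleR[OF _ p2, of "1/c"] c1 by simp
    then show ?thesis unfolding Rmax_def by (intro Inf_lower) blast
  qed
  ultimately have "Rmax \<rho> \<sigma> * Rmax \<sigma> \<rho> \<le> ereal c * ereal (K / c)"
    using Rmax_nonneg[OF s r] c1 by (intro ereal_mult_mono) auto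
  also have "\<dots> = ereal K" using c1 by simp
  finally have "Rmax \<rho> \<sigma> * Rmax \<sigma> \<rho> \<le> ereal K" .
  moreover have "Omega F \<rho> \<le> Rmax \<rho> \<sigma> * Rmax \<sigma> \<rho>" unfolding Omega_def by (rule INF_lower[OF sF])
  ultimately show ?thesis by simp
qed

lemma free_compact:
  assumes "free_set F" shows "compact F"
proof -
  have "F = {X. density X} \<inter> F" using assms unfolding free_set_def by blast
  moreover have "closed F" using assms unfolding free_set_def by blast
  ultimately show ?thesis using compact_Int_closed[OF compact_density, of F] by simp
qed

lemma free_cone_closed:
  assumes "free_set F" shows "closed (free_cone F)"
proof -
  have "free_cone F = conic hull F" unfolding free_cone_def conic_hull_explicit ..
  moreover have "0 \<notin> F" using assms unfolding free_set_def density_def by force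
  ultimately show ?thesis using closed_conic_hull[of F] free_compact[OF assms] by simp
qed

lemma free_cone_convex:
  assumes "free_set F" shows "convex (free_cone F)"
  unfolding convex_def
proof (intro ballI allI impI)
  fix x y and u v :: real assume x: "x \<in> free_cone F" and y: "y \<in> free_cone F" and uv: "0 \<le> u" "0 \<le> v" "u + v = 1"
  show "u *\<^sub>R x + v *\<^sub>R y \<in> free_cone F"
  proof (rule cone_add)
    show "convex F" using assms unfolding free_set_def by blast
    show "u *\<^sub>R x \<in> free_cone F" using x uv by (intro cone_scale) auto
    show "v *\<^sub>R y \<in> free_cone F" using y uv by (intro cone_scale) auto
  qed
qed

lemma trace_norm_le: "cmod (trace (W::complex^'n^'n)) \<le> real CARD('n) * norm W"
proof -
  have "cmod (trace W) \<le> (\<Sum>i\<in>UNIV. cmod (W$i$i))" unfolding trace_def by (rule norm_sum)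
  also have "\<dots> \<le> (\<Sum>i\<in>(UNIV::'n set). norm W)"
  proof (rule sum_mono)
    fix i
    have "cmod (W$i$i) \<le> norm (W$i)" by (rule Finite_Cartesian_Product.norm_nth_le)
    also have "\<dots> \<le> norm W" by (rule Finite_Cartesian_Product.norm_nth_le)
    finally show "cmod (W$i$i) \<le> norm W" .
  qed
  finally show ?thesis by simp
qed

lemma sandwich_bound:
  fixes X \<rho> W1 W2 :: "complex^'n^'n"
  assumes r: "density \<rho>" and p1: "psd (X - \<rho> + W1)" and p2: "psd (K *\<^sub>R \<rho> - X + W2)"
    and w1: "norm W1 \<le> 1" and w2: "norm W2 \<le> 1"
  shows "norm X \<le> real (CARD('n) * CARD('n)) * (\<bar>K\<bar> + 2 * real CARD('n)) + norm \<rho> + 1"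
proof -
  define P where "P = X - \<rho> + W1"
  define Q where "Q = K *\<^sub>R \<rho> - X + W2"
  have PQ: "P + Q = K *\<^sub>R \<rho> - \<rho> + W1 + W2" unfolding P_def Q_def by simp
  have tQ: "Re (trace Q) \<ge> 0" using psd_trace p2 Q_def by blast
  have tr: "trace \<rho> = 1" using r density_def by blast
  have "Re (trace (P + Q)) = K - 1 + Re (trace W1) + Re (trace W2)"
    unfolding PQ by (simp add: trace_add trace_sub trace_scaleR tr)
  moreover have "Re (trace W1) \<le> real CARD('n)"
  proof -
    have "real CARD('n) * norm W1 \<le> real CARD('n) * 1" using w1 by (intro mult_left_mono) auto
    then show ?thesis using trace_norm_le[of W1] complex_Re_le_cmod[of "trace W1"] by linarith
  qed
  moreover have "Re (trace W2) \<le> real CARD('n)"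
  proof -
    have "real CARD('n) * norm W2 \<le> real CARD('n) * 1" using w2 by (intro mult_left_mono) auto
    then show ?thesis using trace_norm_le[of W2] complex_Re_le_cmod[of "trace W2"] by linarith
  qed
  ultimately have "Re (trace P) \<le> \<bar>K\<bar> + 2 * real CARD('n)"
    using tQ by (simp add: trace_add)
  then have "real (CARD('n) * CARD('n)) * Re (trace P) \<le> real (CARD('n) * CARD('n)) * (\<bar>K\<bar> + 2 * real CARD('n))"
    by (intro mult_left_mono) auto
  then have "norm P \<le> real (CARD('n) * CARD('n)) * (\<bar>K\<bar> + 2 * real CARD('n))"
  proof -
    have "psd P" using p1 P_def by simp
    then show ?thesis using psd_norm_bound[of P] \<open>real (CARD('n) * CARD('n)) * Re (trace P) \<le> _\<close> by linarith
  qed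
  moreover have "X = P + \<rho> - W1" unfolding P_def by simp
  then have "norm X \<le> norm P + norm \<rho> + norm W1"
    using norm_triangle_ineq4[of "P + \<rho>" W1] norm_triangle_ineq[of P \<rho>] by simp
  ultimately show ?thesis using w1 by simp
qed

definition Mset :: "complex^'n^'n \<Rightarrow> real \<Rightarrow> (complex^'n^'n) set \<Rightarrow> ((complex^'n^'n) \<times> (complex^'n^'n)) set" where
  "Mset \<rho> K C = {(P1 - X + t *\<^sub>R \<rho>, P2 + X - (t * K) *\<^sub>R \<rho>) | P1 P2 X t. psd P1 \<and> psd P2 \<and> X \<in> C \<and> t \<ge> 0}"

lemma approx_step:
  fixes \<rho> :: "complex^'n^'n"
  assumes r: "density \<rho>" and K: "K \<ge> 0"
    and Cscale: "\<And>x c. x \<in> C \<Longrightarrow> c \<ge> 0 \<Longrightarrow> c *\<^sub>R x \<in> C"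
    and zc: "(- \<rho>, 0) \<in> closure (Mset \<rho> K C)" and e: "e > 0"
  shows "\<exists>X W1 W2. X \<in> C \<and> psd (X - \<rho> + W1) \<and> psd (K *\<^sub>R \<rho> - X + W2) \<and> norm W1 < e \<and> norm W2 < e"
proof -
  obtain m where mM: "m \<in> Mset \<rho> K C" and d: "dist m (- \<rho>, 0) < e"
    using zc e unfolding closure_approachable by blast
  obtain P1 P2 X t where m: "m = (P1 - X + t *\<^sub>R \<rho>, P2 + X - (t * K) *\<^sub>R \<rho>)"
    and p1: "psd P1" and p2: "psd P2" and XC: "X \<in> C" and t: "t \<ge> 0"
    using mM unfolding Mset_def by blast
  define s where "s = 1 + t"
  have s1: "s \<ge> 1" using t s_def by simp
  define Y1 where "Y1 = P1 - X + t *\<^sub>R \<rho> + \<rho>"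
  define Y2 where "Y2 = P2 + X - (t * K) *\<^sub>R \<rho>"
  have "dist m (- \<rho>, 0) = norm (Y1, Y2)" unfolding m Y1_def Y2_def dist_norm by simp
  then have n1: "norm Y1 < e" and n2: "norm Y2 < e" using d norm_fst_le[of Y1 Y2] norm_snd_le[of Y2 Y1]
    by linarith+
  define Xh where "Xh = (1 / s) *\<^sub>R X"
  define W1 where "W1 = (1 / s) *\<^sub>R Y1"
  define W2 where "W2 = (1 / s) *\<^sub>R Y2"
  have "Xh \<in> C" unfolding Xh_def using XC s1 Cscale by simp
  moreover have "norm W1 < e"
  proof -
    have "norm W1 = norm Y1 / s" unfolding W1_def using s1 by simp
    moreover have "norm Y1 \<le> norm Y1 * s" using s1 by (simp add: mult_le_cancel_left1)
    then have "norm Y1 / s \<le> norm Y1" using s1 by (simp add: divide_le_eq)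
    ultimately show ?thesis using n1 by linarith
  qed
  moreover have "norm W2 < e"
  proof -
    have "norm W2 = norm Y2 / s" unfolding W2_def using s1 by simp
    moreover have "norm Y2 \<le> norm Y2 * s" using s1 by (simp add: mult_le_cancel_left1)
    then have "norm Y2 / s \<le> norm Y2" using s1 by (simp add: divide_le_eq)
    ultimately show ?thesis using n2 by linarith
  qed
  moreover have "Xh - \<rho> + W1 = (1 / s) *\<^sub>R P1"
  proof -
    have c: "(1 / s) * t + 1 / s = 1" using s1 unfolding s_def by (simp add: field_simps)
    have "Xh - \<rho> + W1 = (1 / s) *\<^sub>R P1 + (((1 / s) * t + 1 / s) *\<^sub>R \<rho> - \<rho>)"
      unfolding Xh_def W1_def Y1_def by (simp add: algebra_simps)
    also have "\<dots> = (1 / s) *\<^sub>R P1" unfolding c by simp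
    finally show ?thesis .
  qed
  moreover have "K *\<^sub>R \<rho> - Xh + W2 = (1 / s) *\<^sub>R (K *\<^sub>R \<rho> + P2)"
  proof -
    have c0: "(1 / s) * t + 1 / s = 1" using s1 unfolding s_def by (simp add: field_simps)
    have "(1 / s) * (t * K) + K / s = K * ((1 / s) * t + 1 / s)" by (simp add: algebra_simps)
    then have c: "(1 / s) * (t * K) + K / s = K" unfolding c0 by simp
    have "K *\<^sub>R \<rho> - Xh + W2 = (1 / s) *\<^sub>R P2 + (K *\<^sub>R \<rho> - ((1 / s) * (t * K)) *\<^sub>R \<rho>)"
      unfolding Xh_def W2_def Y2_def by (simp add: algebra_simps)
    also have "\<dots> = (1 / s) *\<^sub>R P2 + (K / s) *\<^sub>R \<rho>"
    proof -
      have c2: "t * K / s + K / s = K" using c by simp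
      have c': "K - t * K / s = K / s" using c2 by linarith
      show ?thesis by (simp add: scaleR_left_diff_distrib[symmetric] c')
    qed
    also have "\<dots> = (1 / s) *\<^sub>R (K *\<^sub>R \<rho> + P2)" by (simp add: algebra_simps)
    finally show ?thesis .
  qed
  moreover have "psd ((1 / s) *\<^sub>R P1)" using p1 s1 by (intro psd_scaleR) auto
  moreover have "psd ((1 / s) *\<^sub>R (K *\<^sub>R \<rho> + P2))" using p2 s1 K r unfolding density_def
    by (intro psd_scaleR psd_add) auto
  ultimately show ?thesis by (intro exI[of _ Xh] exI[of _ W1] exI[of _ W2]) simp
qed

lemma no_closure:
  fixes \<rho> :: "complex^'n^'n"
  assumes r: "density \<rho>" and K: "K \<ge> 0"
    and Cscale: "\<And>x c. x \<in> C \<Longrightarrow> c \<ge> 0 \<Longrightarrow> c *\<^sub>R x \<in> C"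
    and Ccl: "closed C"
    and nosand: "\<not> (\<exists>X\<in>C. psd (X - \<rho>) \<and> psd (K *\<^sub>R \<rho> - X))"
  shows "(- \<rho>, 0) \<notin> closure (Mset \<rho> K C)"
proof
  assume zc: "(- \<rho>, 0) \<in> closure (Mset \<rho> K C)"
  define Qp where "Qp n T \<longleftrightarrow> fst T \<in> C \<and> psd (fst T - \<rho> + fst (snd T)) \<and> psd (K *\<^sub>R \<rho> - fst T + snd (snd T))
     \<and> norm (fst (snd T)) < 1 / real (Suc n) \<and> norm (snd (snd T)) < 1 / real (Suc n)" for n T
  have ex: "\<exists>T. Qp n T" for n
  proof -
    have e: "1 / real (Suc n) > 0" by simp
    obtain X W1 W2 where "X \<in> C" "psd (X - \<rho> + W1)" "psd (K *\<^sub>R \<rho> - X + W2)"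
        "norm W1 < 1 / real (Suc n)" "norm W2 < 1 / real (Suc n)"
      using approx_step[OF r K Cscale zc e] by blast
    then have "Qp n (X, W1, W2)" unfolding Qp_def by simp
    then show ?thesis by blast
  qed
  obtain f where f: "\<And>n. Qp n (f n)" using choice[of Qp] ex by blast
  define Xs where "Xs n = fst (f n)" for n
  define W1s where "W1s n = fst (snd (f n))" for n
  define W2s where "W2s n = snd (snd (f n))" for n
  have XC: "Xs n \<in> C" for n using f[of n] unfolding Qp_def Xs_def by blast
  have P1: "psd (Xs n - \<rho> + W1s n)" for n using f[of n] unfolding Qp_def Xs_def W1s_def by blast
  have P2: "psd (K *\<^sub>R \<rho> - Xs n + W2s n)" for n using f[of n] unfolding Qp_def Xs_def W2s_def by blast
  have N1: "norm (W1s n) < 1 / real (Suc n)" for n using f[of n] unfolding Qp_def W1s_def by blast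
  have N2: "norm (W2s n) < 1 / real (Suc n)" for n using f[of n] unfolding Qp_def W2s_def by blast
  have le1: "1 / real (Suc n) \<le> 1" for n by simp
  define B0 where "B0 = real (CARD('n) * CARD('n)) * (\<bar>K\<bar> + 2 * real CARD('n)) + norm \<rho> + 1"
  have bnd: "norm (Xs n) \<le> B0" for n
  proof -
    have "norm (W1s n) \<le> 1" using N1[of n] le1[of n] by linarith
    moreover have "norm (W2s n) \<le> 1" using N2[of n] le1[of n] by linarith
    ultimately show ?thesis unfolding B0_def by (rule sandwich_bound[OF r P1 P2])
  qed
  have "bounded (range Xs)" unfolding bounded_iff
  proof (intro exI ballI)
    fix x assume "x \<in> range Xs"
    then obtain n where "x = Xs n" by blast
    then show "norm x \<le> B0" using bnd by simp
  qed
  then obtain l r where sm: "strict_mono r" and lim: "(Xs \<circ> r) \<longlonglongrightarrow> l"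
    using bounded_imp_convergent_subsequence by blast
  have W1: "W1s \<longlonglongrightarrow> 0" by (rule LIMSEQ_norm_0) (rule N1)
  have W2: "W2s \<longlonglongrightarrow> 0" by (rule LIMSEQ_norm_0) (rule N2)
  have W1r: "(W1s \<circ> r) \<longlonglongrightarrow> 0" using LIMSEQ_subseq_LIMSEQ[OF W1 sm] .
  have W2r: "(W2s \<circ> r) \<longlonglongrightarrow> 0" using LIMSEQ_subseq_LIMSEQ[OF W2 sm] .
  have lC: "l \<in> C"
  proof (rule closed_sequentially[OF Ccl _ lim])
    fix n show "(Xs \<circ> r) n \<in> C" using XC by simp
  qed
  have t1: "(\<lambda>n. (Xs \<circ> r) n - \<rho> + (W1s \<circ> r) n) \<longlonglongrightarrow> l - \<rho> + 0"
    using lim W1r by (intro tendsto_add tendsto_diff tendsto_const)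
  have "l - \<rho> + 0 \<in> {X. psd X}"
  proof (rule closed_sequentially[OF closed_psd _ t1])
    fix n show "(Xs \<circ> r) n - \<rho> + (W1s \<circ> r) n \<in> {X. psd X}" using P1 by simp
  qed
  moreover have t2: "(\<lambda>n. K *\<^sub>R \<rho> - (Xs \<circ> r) n + (W2s \<circ> r) n) \<longlonglongrightarrow> K *\<^sub>R \<rho> - l + 0"
    using lim W2r by (intro tendsto_add tendsto_diff tendsto_const)
  have "K *\<^sub>R \<rho> - l + 0 \<in> {X. psd X}"
  proof (rule closed_sequentially[OF closed_psd _ t2])
    fix n show "K *\<^sub>R \<rho> - (Xs \<circ> r) n + (W2s \<circ> r) n \<in> {X. psd X}" using P2 by simp
  qed
  ultimately show False using nosand lC by auto
qed

lemma Mset_mem: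
  "psd P1 \<Longrightarrow> psd P2 \<Longrightarrow> X \<in> C \<Longrightarrow> t \<ge> 0 \<Longrightarrow> (P1 - X + t *\<^sub>R \<rho>, P2 + X - (t * K) *\<^sub>R \<rho>) \<in> Mset \<rho> K C"
  unfolding Mset_def by blast

lemma farkas:
  fixes \<rho> :: "complex^'n^'n"
  assumes r: "density \<rho>" and K: "K \<ge> 0"
    and C0: "0 \<in> C" and Cadd: "\<And>x y. x \<in> C \<Longrightarrow> y \<in> C \<Longrightarrow> x + y \<in> C"
    and Cscale: "\<And>x c. x \<in> C \<Longrightarrow> c \<ge> 0 \<Longrightarrow> c *\<^sub>R x \<in> C"
    and Ccl: "closed C"
    and nosand: "\<not> (\<exists>X\<in>C. psd (X - \<rho>) \<and> psd (K *\<^sub>R \<rho> - X))"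
  shows "\<exists>A B. (\<forall>P. psd P \<longrightarrow> inner A P \<ge> 0) \<and> (\<forall>P. psd P \<longrightarrow> inner B P \<ge> 0)
      \<and> (\<forall>X\<in>C. inner B X - inner A X \<ge> 0) \<and> inner A \<rho> - K * inner B \<rho> \<ge> 0 \<and> inner A \<rho> > 0"
proof -
  define M where "M = Mset \<rho> K C"
  have Mscale: "c *\<^sub>R m \<in> M" if mM: "m \<in> M" and cc: "c \<ge> 0" for m c
  proof -
    have mM': "m \<in> Mset \<rho> K C" using mM M_def by simp
    obtain P1 P2 X t where m: "m = (P1 - X + t *\<^sub>R \<rho>, P2 + X - (t * K) *\<^sub>R \<rho>)"
      and p: "psd P1" "psd P2" "X \<in> C" "t \<ge> 0"
      using mM' unfolding Mset_def by blast
    have "c *\<^sub>R m = (c *\<^sub>R P1 - c *\<^sub>R X + (c * t) *\<^sub>R \<rho>, c *\<^sub>R P2 + c *\<^sub>R X - ((c * t) * K) *\<^sub>R \<rho>)"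
      unfolding m by (simp add: scaleR_diff_right scaleR_add_right mult.assoc)
    moreover have "(c *\<^sub>R P1 - c *\<^sub>R X + (c * t) *\<^sub>R \<rho>, c *\<^sub>R P2 + c *\<^sub>R X - ((c * t) * K) *\<^sub>R \<rho>) \<in> M"
      unfolding M_def using p cc by (intro Mset_mem psd_scaleR Cscale) auto
    ultimately show ?thesis by simp
  qed
  have Madd: "m1 + m2 \<in> M" if a1: "m1 \<in> M" and a2: "m2 \<in> M" for m1 m2
  proof -
    have a1': "m1 \<in> Mset \<rho> K C" using a1 M_def by simp
    have a2': "m2 \<in> Mset \<rho> K C" using a2 M_def by simp
    obtain P1 P2 X t where m1: "m1 = (P1 - X + t *\<^sub>R \<rho>, P2 + X - (t * K) *\<^sub>R \<rho>)"
      and p: "psd P1" "psd P2" "X \<in> C" "t \<ge> 0" using a1' unfolding Mset_def by blast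
    obtain Q1 Q2 Y u where m2: "m2 = (Q1 - Y + u *\<^sub>R \<rho>, Q2 + Y - (u * K) *\<^sub>R \<rho>)"
      and q: "psd Q1" "psd Q2" "Y \<in> C" "u \<ge> 0" using a2' unfolding Mset_def by blast
    have "m1 + m2 = ((P1 + Q1) - (X + Y) + (t + u) *\<^sub>R \<rho>, (P2 + Q2) + (X + Y) - ((t + u) * K) *\<^sub>R \<rho>)"
      unfolding m1 m2 by (simp add: algebra_simps)
    moreover have "((P1 + Q1) - (X + Y) + (t + u) *\<^sub>R \<rho>, (P2 + Q2) + (X + Y) - ((t + u) * K) *\<^sub>R \<rho>) \<in> M"
      unfolding M_def using p q by (intro Mset_mem psd_add Cadd) auto
    ultimately show ?thesis by simp
  qed
  have Mconv: "convex M" unfolding convex_def using Mscale Madd by blast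
  have zM: "(- \<rho>, 0) \<notin> closure M" unfolding M_def by (rule no_closure[OF r K Cscale Ccl nosand])
  obtain a b where ab: "inner a (- \<rho>, 0) < b" and ab2: "\<forall>x\<in>closure M. b < inner a x"
    using separating_hyperplane_closed_point[OF convex_closure[OF Mconv] closed_closure zM] by blast
  have ab3: "\<forall>x\<in>M. b < inner a x" using ab2 closure_subset by blast
  have "(0, 0) \<in> M" unfolding M_def using Mset_mem[of 0 0 0 C 0 \<rho> K] psd_0 C0 by simp
  then have "b < inner a (0, 0)" using ab3 by blast
  then have b0: "b < 0" by (simp add: zero_prod_def[symmetric])
  have pos: "inner a m \<ge> 0" if m: "m \<in> M" for m
  proof (rule ccontr)
    assume "\<not> inner a m \<ge> 0"
    then have neg: "inner a m < 0" by simp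
    define c where "c = b / inner a m"
    have c0: "c \<ge> 0" unfolding c_def using neg b0 by (simp add: divide_nonpos_neg less_imp_le)
    have "b < inner a (c *\<^sub>R m)" using ab3 Mscale[OF m c0] by blast
    also have "\<dots> = b" unfolding c_def using neg by simp
    finally show False by simp
  qed
  obtain A B where aAB: "a = (A, B)" by (cases a)
  have "\<forall>P. psd P \<longrightarrow> inner A P \<ge> 0"
  proof (intro allI impI)
    fix P :: "complex^'n^'n" assume "psd P"
    then have "(P - 0 + 0 *\<^sub>R \<rho>, 0 + 0 - (0 * K) *\<^sub>R \<rho>) \<in> M" unfolding M_def
      using C0 psd_0 by (intro Mset_mem) auto
    then show "inner A P \<ge> 0" using pos aAB by fastforce
  qed
  moreover have "\<forall>P. psd P \<longrightarrow> inner B P \<ge> 0"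
  proof (intro allI impI)
    fix P :: "complex^'n^'n" assume "psd P"
    then have "(0 - 0 + 0 *\<^sub>R \<rho>, P + 0 - (0 * K) *\<^sub>R \<rho>) \<in> M" unfolding M_def
      using C0 psd_0 by (intro Mset_mem) auto
    then show "inner B P \<ge> 0" using pos aAB by fastforce
  qed
  moreover have "\<forall>X\<in>C. inner B X - inner A X \<ge> 0"
  proof
    fix X assume "X \<in> C"
    then have "(0 - X + 0 *\<^sub>R \<rho>, 0 + X - (0 * K) *\<^sub>R \<rho>) \<in> M" unfolding M_def
      using psd_0 by (intro Mset_mem) auto
    then have "inner a (- X, X) \<ge> 0" using pos by simp
    then show "inner B X - inner A X \<ge> 0" using aAB by (simp add: inner_minus_right)
  qed
  moreover have "inner A \<rho> - K * inner B \<rho> \<ge> 0"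
  proof -
    have "(0 - 0 + 1 *\<^sub>R \<rho>, 0 + 0 - (1 * K) *\<^sub>R \<rho>) \<in> M" unfolding M_def
      using psd_0 C0 by (intro Mset_mem) auto
    then have "inner a (\<rho>, - (K *\<^sub>R \<rho>)) \<ge> 0" using pos by simp
    then show ?thesis using aAB by (simp add: inner_minus_right)
  qed
  moreover have "inner A \<rho> > 0" using ab b0 aAB by (simp add: inner_minus_right)
  ultimately show ?thesis by blast
qed

lemma trace_sum: "trace (\<Sum>t\<in>T. M t :: complex^'n^'n) = (\<Sum>t\<in>T. trace (M t))"
  by (induction T rule: infinite_finite_induct) (auto simp: trace_add)

lemma frac_ineq:
  fixes a b K c0 c1 :: real
  assumes a: "a > 0" and b: "b \<ge> 0" and K: "K \<ge> 0" and aK: "a \<ge> K * b" and c0: "0 \<le> c0" and c01: "c0 \<le> c1"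
  shows "K / (K + c1) \<le> a / (a + c0 * b)"
proof (cases "K + c1 = 0")
  case True then show ?thesis using a b c0 by (simp add: add_pos_nonneg)
next
  case False
  then have p1: "K + c1 > 0" using K c0 c01 by linarith
  have p2: "a + c0 * b > 0" using a b c0 by (simp add: add_pos_nonneg)
  have "K * b * c0 \<le> a * c0" using aK c0 by (simp add: mult_right_mono)
  also have "\<dots> \<le> a * c1" using a c01 by (simp add: mult_left_mono)
  finally have "K * (a + c0 * b) \<le> a * (K + c1)" by (simp add: algebra_simps)
  then show ?thesis using p1 p2 by (simp add: divide_simps mult.commute)
qed

lemma outer_trace1: "cinner v v = 1 \<Longrightarrow> trace (outer v) = 1"
  by (simp add: trace_outer)

lemma span_to_cone:
  fixes F :: "(complex^'n^'n) set"
  assumes fF: "free_set F" and aF: "affine_free F" and r: "density \<rho>"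
    and X: "X \<in> span F" and p1: "psd (X - \<rho>)"
  shows "X \<in> free_cone F"
proof -
  obtain T u where T: "finite T" "T \<subseteq> F" and Xs: "X = (\<Sum>a\<in>T. u a *\<^sub>R a)"
    using X unfolding span_explicit by blast
  have tra: "trace a = 1" if "a \<in> T" for a using that T fF unfolding free_set_def density_def by blast
  have "trace X = (\<Sum>a\<in>T. complex_of_real (u a) * trace a)" unfolding Xs trace_sum by (simp add: trace_scaleR)
  also have "\<dots> = complex_of_real (\<Sum>a\<in>T. u a)" using tra by simp
  finally have trX: "trace X = complex_of_real (\<Sum>a\<in>T. u a)" .
  define c where "c = (\<Sum>a\<in>T. u a)"
  have "Re (trace (X - \<rho>)) \<ge> 0" using psd_trace[OF p1] by simp
  then have c1: "c \<ge> 1" using r trX unfolding c_def density_def by (simp add: trace_sub)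
  have Tne: "T \<noteq> {}" using c1 unfolding c_def by auto
  define \<sigma> where "\<sigma> = (1 / c) *\<^sub>R X"
  have "\<sigma> \<in> affine hull F" unfolding affine_hull_explicit
  proof (intro CollectI exI conjI)
    show "finite T" "T \<noteq> {}" "T \<subseteq> F" using T Tne by auto
    show "(\<Sum>a\<in>T. u a / c) = 1" using c1 unfolding c_def by (simp add: sum_divide_distrib[symmetric])
    show "(\<Sum>a\<in>T. (u a / c) *\<^sub>R a) = \<sigma>" unfolding \<sigma>_def Xs by (simp add: scaleR_sum_right)
  qed
  moreover have "density \<sigma>"
  proof -
    have "psd X" using psd_add[OF p1, of \<rho>] r unfolding density_def by simp
    then have "psd \<sigma>" unfolding \<sigma>_def using c1 by (intro psd_scaleR) auto
    moreover have "trace \<sigma> = 1"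
    proof -
      have "trace \<sigma> = complex_of_real (1 / c) * complex_of_real c"
        unfolding \<sigma>_def trace_scaleR trX c_def ..
      also have "\<dots> = complex_of_real ((1 / c) * c)" by (rule of_real_mult[symmetric])
      also have "(1 / c) * c = 1" using c1 by simp
      finally show ?thesis by simp
    qed
    ultimately show ?thesis unfolding density_def by simp
  qed
  ultimately have "\<sigma> \<in> F" using aF unfolding affine_free_def by blast
  moreover have "X = c *\<^sub>R \<sigma>" unfolding \<sigma>_def using c1 by simp
  moreover have "c \<ge> 0" using c1 by simp
  ultimately show ?thesis unfolding free_cone_def by blast
qed

lemma cone_psd: "free_set F \<Longrightarrow> x \<in> free_cone F \<Longrightarrow> psd x"
  unfolding free_cone_def free_set_def density_def by (auto intro: psd_scaleR)

lemma mp_hf: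
  assumes "herm \<sigma>"
  shows "mp (hf A) (hf B) P Q \<sigma> = inner A \<sigma> *\<^sub>R P + inner B \<sigma> *\<^sub>R Q"
  unfolding mp_def hf_trace[OF assms] cscale_real ..

lemma key_common:
  fixes F :: "(complex^'n^'n) set" and F' :: "(complex^'m^'m) set"
  assumes fF: "free_set F" and fF': "free_set F'" and r: "density \<rho>" and v: "cinner v v = 1"
    and K: "K \<ge> 0"
    and A: "\<forall>P. psd P \<longrightarrow> inner A P \<ge> 0" and B: "\<forall>P. psd P \<longrightarrow> inner B P \<ge> 0"
    and AK: "inner A \<rho> - K * inner B \<rho> \<ge> 0" and Apos: "inner A \<rho> > 0"
    and w: "psd \<omega>" and tw: "trace \<omega> = complex_of_real (l - 1)" and l1: "l \<ge> 1" and lR: "l < R'"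
    and free: "\<forall>\<sigma>\<in>F. inner A \<sigma> *\<^sub>R outer v + inner B \<sigma> *\<^sub>R \<omega> \<in> free_cone F'"
  shows "\<exists>\<tau>\<in>outs F F' \<rho>. density \<tau> \<and> K / (K + (R' - 1)) \<le> Re (qform \<tau> v)"
proof -
  have pHa: "posfun (hf A)" using hf_posfun A by blast
  have pHb: "posfun (hf B)" using hf_posfun B by blast
  have pr: "psd \<rho>" using r density_def by blast
  have hr: "herm \<rho>" using pr psd_herm by blast
  have trA: "Re (trace (hf A ** \<rho>)) = inner A \<rho>" using hf_trace[OF hr] by simp
  have trB: "Re (trace (hf B ** \<rho>)) = inner B \<rho>" using hf_trace[OF hr] by simp
  have free': "\<forall>\<sigma>\<in>F. mp (hf A) (hf B) (outer v) \<omega> \<sigma> \<in> free_cone F'"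
  proof
    fix \<sigma> assume sF: "\<sigma> \<in> F"
    then have "herm \<sigma>" using fF psd_herm unfolding free_set_def density_def by blast
    then have "mp (hf A) (hf B) (outer v) \<omega> \<sigma> = inner A \<sigma> *\<^sub>R outer v + inner B \<sigma> *\<^sub>R \<omega>"
      by (rule mp_hf)
    then show "mp (hf A) (hf B) (outer v) \<omega> \<sigma> \<in> free_cone F'" using free sF by simp
  qed
  have c0: "l - 1 \<ge> 0" using l1 by simp
  obtain \<tau> where t: "\<tau> \<in> outs F F' \<rho>" "density \<tau>"
    and q: "Re (trace (hf A ** \<rho>)) / (Re (trace (hf A ** \<rho>)) + (l - 1) * Re (trace (hf B ** \<rho>))) \<le> Re (qform \<tau> v)"
    using construct[OF fF fF' r v pHa pHb w tw c0 free'] Apos trA by auto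
  have b0: "inner B \<rho> \<ge> 0" using B pr by blast
  have "K / (K + (R' - 1)) \<le> inner A \<rho> / (inner A \<rho> + (l - 1) * inner B \<rho>)"
    using Apos b0 K AK c0 lR by (intro frac_ineq) auto
  then show ?thesis using t q trA trB by auto
qed

lemma key1:
  fixes F :: "(complex^'n^'n) set" and F' :: "(complex^'m^'m) set"
  assumes fF: "free_set F" and fF': "free_set F'" and r: "density \<rho>" and v: "cinner v v = 1"
    and K: "K \<ge> 0" and KO: "ereal K < Omega F \<rho>" and RR: "std_robustness F' (outer v) < ereal R'"
  shows "\<exists>\<tau>\<in>outs F F' \<rho>. density \<tau> \<and> K / (K + (R' - 1)) \<le> Re (qform \<tau> v)"
proof -
  have cF: "convex F" and neF: "F \<noteq> {}" using fF free_set_def by auto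
  have cF': "convex F'" using fF' free_set_def by auto
  have nosand: "\<not> (\<exists>X\<in>free_cone F. psd (X - \<rho>) \<and> psd (K *\<^sub>R \<rho> - X))"
  proof
    assume "\<exists>X\<in>free_cone F. psd (X - \<rho>) \<and> psd (K *\<^sub>R \<rho> - X)"
    then obtain X where "X \<in> free_cone F" "psd (X - \<rho>)" "psd (K *\<^sub>R \<rho> - X)" by blast
    then have "Omega F \<rho> \<le> ereal K" using Omega_bound[OF fF r K] by blast
    then show False using KO by simp
  qed
  obtain A B where A: "\<forall>P. psd P \<longrightarrow> inner A P \<ge> 0" and B: "\<forall>P. psd P \<longrightarrow> inner B P \<ge> 0"
    and BA: "\<forall>X\<in>free_cone F. inner B X - inner A X \<ge> 0" and AK: "inner A \<rho> - K * inner B \<rho> \<ge> 0"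
    and Apos: "inner A \<rho> > 0"
    using farkas[OF r K cone_zero[OF neF] cone_add[OF cF] cone_scale free_cone_closed[OF fF] nosand] by blast
  obtain \<sigma>' where s'F: "\<sigma>' \<in> F'" and Rs: "RmaxF F' (outer v) \<sigma>' < ereal R'"
    using RR unfolding std_robustness_def by (auto simp: INF_less_iff)
  obtain l where fl: "free_le F' (outer v) (l *\<^sub>R \<sigma>')" and lR: "ereal l < ereal R'"
    using Rs unfolding RmaxF_def by (auto simp: Inf_less_iff)
  define \<omega> where "\<omega> = l *\<^sub>R \<sigma>' - outer v"
  have wc: "\<omega> \<in> free_cone F'" using fl unfolding free_le_def \<omega>_def .
  have pw: "psd \<omega>" using cone_psd[OF fF' wc] .
  have ts: "trace \<sigma>' = 1" using s'F fF' unfolding free_set_def density_def by blast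
  have tw: "trace \<omega> = complex_of_real (l - 1)" unfolding \<omega>_def
    by (simp add: trace_sub trace_scaleR ts outer_trace1[OF v])
  have l1: "l \<ge> 1" using psd_trace[OF pw] tw by simp
  have lsc: "outer v + \<omega> \<in> free_cone F'"
  proof -
    have "outer v + \<omega> = l *\<^sub>R \<sigma>'" unfolding \<omega>_def by simp
    moreover have "l \<ge> 0" using l1 by simp
    ultimately show ?thesis unfolding free_cone_def using s'F by blast
  qed
  have free: "\<forall>\<sigma>\<in>F. inner A \<sigma> *\<^sub>R outer v + inner B \<sigma> *\<^sub>R \<omega> \<in> free_cone F'"
  proof
    fix \<sigma> assume sF: "\<sigma> \<in> F"
    have "psd \<sigma>" using sF fF unfolding free_set_def density_def by blast
    then have a0: "inner A \<sigma> \<ge> 0" using A by blast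
    have "\<sigma> = 1 *\<^sub>R \<sigma> \<and> (0::real) \<le> 1 \<and> \<sigma> \<in> F" using sF by simp
    then have "\<sigma> \<in> free_cone F" unfolding free_cone_def by blast
    then have ba: "inner B \<sigma> - inner A \<sigma> \<ge> 0" using BA by blast
    have "inner A \<sigma> *\<^sub>R outer v + inner B \<sigma> *\<^sub>R \<omega> =
          inner A \<sigma> *\<^sub>R (outer v + \<omega>) + (inner B \<sigma> - inner A \<sigma>) *\<^sub>R \<omega>"
      by (simp add: algebra_simps)
    also have "\<dots> \<in> free_cone F'"
      using cone_add[OF cF' cone_scale[OF lsc a0] cone_scale[OF wc ba]] .
    finally show "inner A \<sigma> *\<^sub>R outer v + inner B \<sigma> *\<^sub>R \<omega> \<in> free_cone F'" .
  qed
  show ?thesis using key_common[OF fF fF' r v K A B AK Apos pw tw l1 _ free] lR by simp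
qed

lemma key2:
  fixes F :: "(complex^'n^'n) set" and F' :: "(complex^'m^'m) set"
  assumes fF: "free_set F" and fF': "free_set F'" and r: "density \<rho>" and v: "cinner v v = 1"
    and aF: "affine_free F"
    and K: "K \<ge> 0" and KO: "ereal K < Omega F \<rho>" and RR: "gen_robustness F' (outer v) < ereal R'"
  shows "\<exists>\<tau>\<in>outs F F' \<rho>. density \<tau> \<and> K / (K + (R' - 1)) \<le> Re (qform \<tau> v)"
proof -
  have cF': "convex F'" using fF' free_set_def by auto
  have nosand: "\<not> (\<exists>X\<in>span F. psd (X - \<rho>) \<and> psd (K *\<^sub>R \<rho> - X))"
  proof
    assume "\<exists>X\<in>span F. psd (X - \<rho>) \<and> psd (K *\<^sub>R \<rho> - X)"
    then obtain X where X: "X \<in> span F" "psd (X - \<rho>)" "psd (K *\<^sub>R \<rho> - X)" by blast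
    then have "X \<in> free_cone F" using span_to_cone[OF fF aF r] by blast
    then have "Omega F \<rho> \<le> ereal K" using Omega_bound[OF fF r K] X by blast
    then show False using KO by simp
  qed
  have Cscale: "c *\<^sub>R x \<in> span F" if "x \<in> span F" "c \<ge> 0" for x c using that by (simp add: span_mul)
  have Ccl: "closed (span F)" by (rule closed_subspace) simp
  obtain A B where A: "\<forall>P. psd P \<longrightarrow> inner A P \<ge> 0" and B: "\<forall>P. psd P \<longrightarrow> inner B P \<ge> 0"
    and BA: "\<forall>X\<in>span F. inner B X - inner A X \<ge> 0" and AK: "inner A \<rho> - K * inner B \<rho> \<ge> 0"
    and Apos: "inner A \<rho> > 0"
    using farkas[OF r K span_zero span_add Cscale Ccl nosand] by blast
  obtain \<sigma>' where s'F: "\<sigma>' \<in> F'" and Rs: "Rmax (outer v) \<sigma>' < ereal R'"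
    using RR unfolding gen_robustness_def by (auto simp: INF_less_iff)
  obtain l where fl: "loewner_le (outer v) (l *\<^sub>R \<sigma>')" and lR: "ereal l < ereal R'"
    using Rs unfolding Rmax_def by (auto simp: Inf_less_iff)
  define \<omega> where "\<omega> = l *\<^sub>R \<sigma>' - outer v"
  have pw: "psd \<omega>" using fl unfolding loewner_le_def \<omega>_def .
  have ts: "trace \<sigma>' = 1" using s'F fF' unfolding free_set_def density_def by blast
  have tw: "trace \<omega> = complex_of_real (l - 1)" unfolding \<omega>_def
    by (simp add: trace_sub trace_scaleR ts outer_trace1[OF v])
  have l1: "l \<ge> 1" using psd_trace[OF pw] tw by simp
  have lsc: "outer v + \<omega> \<in> free_cone F'"
  proof -
    have "outer v + \<omega> = l *\<^sub>R \<sigma>'" unfolding \<omega>_def by simp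
    moreover have "l \<ge> 0" using l1 by simp
    ultimately show ?thesis unfolding free_cone_def using s'F by blast
  qed
  have free: "\<forall>\<sigma>\<in>F. inner A \<sigma> *\<^sub>R outer v + inner B \<sigma> *\<^sub>R \<omega> \<in> free_cone F'"
  proof
    fix \<sigma> assume sF: "\<sigma> \<in> F"
    have "psd \<sigma>" using sF fF unfolding free_set_def density_def by blast
    then have a0: "inner A \<sigma> \<ge> 0" using A by blast
    have s1: "\<sigma> \<in> span F" using sF span_superset by blast
    have s2: "- \<sigma> \<in> span F" using span_neg[OF s1] .
    have "inner B \<sigma> - inner A \<sigma> \<ge> 0" using BA s1 by blast
    moreover have "inner B (- \<sigma>) - inner A (- \<sigma>) \<ge> 0" using BA s2 by blast
    ultimately have eq: "inner B \<sigma> = inner A \<sigma>" by (simp add: inner_minus_right)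
    have "inner A \<sigma> *\<^sub>R outer v + inner B \<sigma> *\<^sub>R \<omega> = inner A \<sigma> *\<^sub>R (outer v + \<omega>)"
      unfolding eq by (simp add: scaleR_add_right)
    also have "\<dots> \<in> free_cone F'" using cone_scale[OF lsc a0] .
    finally show "inner A \<sigma> *\<^sub>R outer v + inner B \<sigma> *\<^sub>R \<omega> \<in> free_cone F'" .
  qed
  show ?thesis using key_common[OF fF fF' r v K A B AK Apos pw tw l1 _ free] lR by simp
qed

lemma ereal_m1: "ereal r - 1 = ereal (r - 1)"
  by (simp add: one_ereal_def)
lemma ereal_p1: "ereal r + 1 = ereal (r + 1)"
  by (simp add: one_ereal_def)

lemma thr_inf: "eps_threshold Om \<infinity> = 1"
  unfolding eps_threshold_def by simp

lemma thr_Om_inf: "r \<ge> 1 \<Longrightarrow> eps_threshold \<infinity> (ereal r) = 0"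
proof (cases "r = 1")
  case True
  then show ?thesis unfolding eps_threshold_def ereal_m1 by (simp add: zero_ereal_def[symmetric])
next
  case False
  assume "r \<ge> 1"
  then have "r - 1 > 0" using False by simp
  then show ?thesis unfolding eps_threshold_def ereal_m1 by simp
qed

lemma thr_fin1: "w > 0 \<Longrightarrow> eps_threshold (ereal w) (ereal 1) = 0"
  unfolding eps_threshold_def ereal_m1 by (simp add: zero_ereal_def[symmetric])

lemma thr_fin: "w > 0 \<Longrightarrow> r > 1 \<Longrightarrow> eps_threshold (ereal w) (ereal r) = ereal ((r - 1) / (w + r - 1))"
proof -
  assume w: "w > 0" and r: "r > 1"
  have "inverse (ereal (r - 1)) = ereal (inverse (r - 1))" using r by simp
  then have "ereal w * inverse (ereal r - 1) + 1 = ereal (w * inverse (r - 1) + 1)"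
    unfolding ereal_m1 by (simp add: ereal_p1)
  moreover have "w * inverse (r - 1) + 1 > 0" using w r by (simp add: add_pos_nonneg)
  ultimately have "eps_threshold (ereal w) (ereal r) = ereal (inverse (w * inverse (r - 1) + 1))"
    unfolding eps_threshold_def by simp
  also have "inverse (w * inverse (r - 1) + 1) = (r - 1) / (w + r - 1)"
    using w r by (simp add: field_simps)
  finally show ?thesis .
qed

lemma choose_KR:
  fixes Om R :: ereal and \<epsilon> \<delta> :: real
  assumes O1: "Om \<ge> 1" and R1: "R \<ge> 1" and eps: "ereal \<epsilon> \<ge> eps_threshold Om R"
    and e1: "\<epsilon> < 1" and d: "\<delta> > 0"
  shows "\<exists>K R'. 0 \<le> K \<and> ereal K < Om \<and> R < ereal R' \<and> 1 - \<epsilon> - \<delta> \<le> K / (K + (R' - 1))"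
proof -
  obtain r where Rr: "R = ereal r"
  proof (cases R)
    case (real r) then show ?thesis using that by blast
  next
    case PInf then show ?thesis using eps e1 thr_inf by simp
  next
    case MInf then show ?thesis using R1 by simp
  qed
  have r1: "r \<ge> 1" using R1 Rr by simp
  show ?thesis
  proof (cases Om)
    case PInf
    have e0: "\<epsilon> \<ge> 0" using eps thr_Om_inf[OF r1] PInf Rr by simp
    define K where "K = (r + 1) / \<delta>"
    have K0: "K \<ge> 0" unfolding K_def using r1 d by simp
    have dK: "\<delta> * K = r + 1" unfolding K_def using d by simp
    have pos: "K + r > 0" using K0 r1 by simp
    have "(1 - \<delta>) * (K + r) \<le> K"
    proof -
      have "(1 - \<delta>) * r \<le> r" using d r1 by (simp add: algebra_simps)
      then have "(1 - \<delta>) * (K + r) \<le> K - \<delta> * K + r" by (simp add: algebra_simps)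
      then show ?thesis using dK by simp
    qed
    then have "1 - \<delta> \<le> K / (K + r)" using pos by (simp add: le_divide_eq)
    then have "1 - \<epsilon> - \<delta> \<le> K / (K + ((r + 1) - 1))" using e0 by simp
    moreover have "ereal K < Om" using PInf by simp
    moreover have "R < ereal (r + 1)" using Rr by simp
    ultimately show ?thesis using K0 by blast
  next
    case (real w)
    have w1: "w \<ge> 1" using O1 real by simp
    define D where "D = w + r - 1"
    have D1: "D \<ge> 1" unfolding D_def using w1 r1 by simp
    have epsw: "1 - \<epsilon> \<le> w / D"
    proof (cases "r = 1")
      case True
      then have "\<epsilon> \<ge> 0" using eps thr_fin1[of w] w1 real Rr by simp
      moreover have "w / D = 1" unfolding D_def using True w1 by simp
      ultimately show ?thesis by simp
    next
      case False
      then have r1': "r > 1" using r1 by simp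
      have "\<epsilon> \<ge> (r - 1) / (w + r - 1)" using eps thr_fin[of w r] w1 r1' real Rr by simp
      moreover have "1 - (r - 1) / (w + r - 1) = w / D" unfolding D_def using D1 D_def
        by (simp add: field_simps)
      ultimately show ?thesis by (smt (verit))
    qed
    define \<eta> where "\<eta> = min (\<delta> * D) (w / 2)"
    have \<eta>0: "\<eta> > 0" unfolding \<eta>_def using d D1 w1 by simp
    have \<eta>1: "\<eta> \<le> \<delta> * D" and \<eta>2: "\<eta> \<le> w / 2" unfolding \<eta>_def by auto
    define K where "K = w - \<eta>"
    have K0: "K \<ge> 0" unfolding K_def using \<eta>2 w1 by simp
    have sumD: "K + ((r + \<eta>) - 1) = D" unfolding K_def D_def by simp
    have "K / D = w / D - \<eta> / D" unfolding K_def by (simp add: diff_divide_distrib)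
    moreover have "\<eta> / D \<le> \<delta>" using \<eta>1 D1 by (simp add: divide_le_eq mult.commute)
    ultimately have "w / D - \<delta> \<le> K / D" by simp
    then have "1 - \<epsilon> - \<delta> \<le> K / (K + ((r + \<eta>) - 1))" using epsw sumD by simp
    moreover have "ereal K < Om" using real \<eta>0 unfolding K_def by simp
    moreover have "R < ereal (r + \<eta>)" using Rr \<eta>0 by simp
    ultimately show ?thesis using K0 by blast
  next
    case MInf then show ?thesis using O1 by simp
  qed
qed

lemma std_ge1:
  assumes fF': "free_set F'" and p: "density \<phi>"
  shows "std_robustness F' \<phi> \<ge> 1"
  unfolding std_robustness_def
proof (rule INF_greatest)
  fix \<sigma> assume sF: "\<sigma> \<in> F'"
  have ts: "trace \<sigma> = 1" using sF fF' unfolding free_set_def density_def by blast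
  show "1 \<le> RmaxF F' \<phi> \<sigma>" unfolding RmaxF_def
  proof (rule Inf_greatest, clarify)
    fix l assume "free_le F' \<phi> (l *\<^sub>R \<sigma>)"
    then have "psd (l *\<^sub>R \<sigma> - \<phi>)" unfolding free_le_def using cone_psd[OF fF'] by blast
    then have "Re (trace (l *\<^sub>R \<sigma> - \<phi>)) \<ge> 0" using psd_trace by blast
    then show "1 \<le> ereal l" using p ts unfolding density_def by (simp add: trace_sub trace_scaleR)
  qed
qed

lemma gen_ge1:
  assumes fF': "free_set F'" and p: "density \<phi>"
  shows "gen_robustness F' \<phi> \<ge> 1"
  unfolding gen_robustness_def
proof (rule INF_greatest)
  fix \<sigma> assume sF: "\<sigma> \<in> F'"
  then have "density \<sigma>" using fF' free_set_def by blast
  then show "1 \<le> Rmax \<phi> \<sigma>" using Rmax_ge1[OF p] by blast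
qed

lemma trivial_out:
  fixes F :: "(complex^'n^'n) set" and F' :: "(complex^'m^'m) set"
  assumes fF: "free_set F" and fF': "free_set F'" and r: "density \<rho>"
  shows "\<exists>\<tau>\<in>outs F F' \<rho>. density \<tau>"
proof -
  obtain s where sF: "s \<in> F'" using fF' free_set_def by blast
  have ds: "density s" using sF fF' free_set_def by blast
  define E where "E = mp (mat 1) (0::complex^'n^'n) s (0::complex^'m^'m)"
  have Ee: "E X = cscale (trace X) s" for X
    unfolding E_def mp_def by (simp add: cscale_def vec_eq_iff)
  have p1: "posfun (mat 1 :: complex^'n^'n)" unfolding posfun_def matrix_mul_lid using psd_trace by blast
  have p0: "posfun (0 :: complex^'n^'n)" unfolding posfun_def by simp
  have cp: "completely_positive E" unfolding E_def using p1 p0 ds psd_0 density_def by (intro mp_cp) auto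
  have trE: "trace (E X) = trace X" for X using ds unfolding Ee density_def by (simp add: trace_cscale)
  have tni: "trace_nonincreasing E" unfolding trace_nonincreasing_def using trE by simp
  have rng: "E \<in> RNG_ops F F'" unfolding RNG_ops_def
  proof (intro CollectI conjI cp tni ballI)
    fix \<sigma> assume "\<sigma> \<in> F"
    then have "trace \<sigma> = 1" using fF free_set_def density_def by blast
    then have "E \<sigma> = 1 *\<^sub>R s" unfolding Ee by (simp add: cscale_def vec_eq_iff)
    then show "\<exists>\<sigma>'\<in>F'. \<exists>p. 0 \<le> p \<and> p \<le> 1 \<and> E \<sigma> = p *\<^sub>R \<sigma>'" using sF
      by (intro bexI[of _ s] exI[of _ 1]) auto
  qed
  have tr: "trace \<rho> = 1" using r density_def by blast
  have Er: "E \<rho> = s" unfolding Ee tr by (simp add: cscale_def vec_eq_iff)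
  have "Re (trace (E \<rho>)) > 0" using Er ds unfolding density_def by simp
  then have "(1 / Re (trace (E \<rho>))) *\<^sub>R E \<rho> \<in> outs F F' \<rho>"
    unfolding outs_def using rng by blast
  moreover have "trace s = 1" using ds unfolding density_def by blast
  then have "(1 / Re (trace (E \<rho>))) *\<^sub>R E \<rho> = s" using Er by simp
  ultimately show ?thesis using ds by auto
qed

lemma prob_transform_outs: "prob_transform F F' \<rho> \<tau> \<longleftrightarrow> \<tau> \<in> closure (outs F F' \<rho>)"
  unfolding prob_transform_def outs_def ..

lemma fidelity_nonneg: "fidelity \<tau> \<phi> \<ge> 0"
  unfolding fidelity_def by simp

lemma main_generic:
  fixes F :: "(complex^'n^'n) set" and F' :: "(complex^'m^'m) set"
  assumes fF: "free_set F" and fF': "free_set F'" and r: "density \<rho>" and v: "cinner v v = 1"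
    and R1: "R \<ge> 1"
    and key: "\<And>K R'. 0 \<le> K \<Longrightarrow> ereal K < Omega F \<rho> \<Longrightarrow> R < ereal R' \<Longrightarrow>
        \<exists>\<tau>\<in>outs F F' \<rho>. density \<tau> \<and> K / (K + (R' - 1)) \<le> Re (qform \<tau> v)"
    and eps: "ereal \<epsilon> \<ge> eps_threshold (Omega F \<rho>) R"
  shows "\<exists>\<tau>. density \<tau> \<and> prob_transform F F' \<rho> \<tau> \<and> fidelity \<tau> (outer v) \<ge> 1 - \<epsilon>"
proof (cases "\<epsilon> \<ge> 1")
  case True
  obtain \<tau> where t: "\<tau> \<in> outs F F' \<rho>" "density \<tau>" using trivial_out[OF fF fF' r] by blast
  have "prob_transform F F' \<rho> \<tau>" unfolding prob_transform_outs using t closure_subset by blast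
  moreover have "fidelity \<tau> (outer v) \<ge> 1 - \<epsilon>" using fidelity_nonneg[of \<tau> "outer v"] True by simp
  ultimately show ?thesis using t by blast
next
  case False
  then have e1: "\<epsilon> < 1" by simp
  have O1: "Omega F \<rho> \<ge> 1" by (rule Omega_ge1[OF fF r])
  have approx: "\<exists>\<tau>\<in>outs F F' \<rho>. density \<tau> \<and> 1 - \<epsilon> - \<delta> \<le> Re (qform \<tau> v)" if d: "\<delta> > 0" for \<delta>
  proof -
    obtain K R' where KR: "0 \<le> K" "ereal K < Omega F \<rho>" "R < ereal R'" "1 - \<epsilon> - \<delta> \<le> K / (K + (R' - 1))"
      using choose_KR[OF O1 R1 eps e1 d] by blast
    obtain \<tau> where "\<tau> \<in> outs F F' \<rho>" "density \<tau>" "K / (K + (R' - 1)) \<le> Re (qform \<tau> v)"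
      using key[OF KR(1) KR(2) KR(3)] by blast
    then show ?thesis using KR(4) by force
  qed
  define S where "S = {X::complex^'m^'m. density X} \<inter> closure (outs F F' \<rho>)"
  have Sc: "compact S" unfolding S_def by (rule compact_Int_closed[OF compact_density closed_closure])
  obtain \<tau>0 where t0: "\<tau>0 \<in> outs F F' \<rho>" "density \<tau>0" using approx[of 1] by auto
  have Sne: "S \<noteq> {}" unfolding S_def using t0 closure_subset by blast
  define g where "g X = Re (qform X v)" for X :: "complex^'m^'m"
  have gc: "continuous_on S g" unfolding g_def qform_def by (intro continuous_intros)
  obtain \<tau> where tS: "\<tau> \<in> S" and tmax: "\<And>y. y \<in> S \<Longrightarrow> g y \<le> g \<tau>"
    using continuous_attains_sup[OF Sc Sne gc] by blast
  have "g \<tau> \<ge> 1 - \<epsilon>"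
  proof (rule ccontr)
    assume "\<not> g \<tau> \<ge> 1 - \<epsilon>"
    then have d: "(1 - \<epsilon> - g \<tau>) / 2 > 0" by simp
    obtain y where y: "y \<in> outs F F' \<rho>" "density y" "1 - \<epsilon> - (1 - \<epsilon> - g \<tau>) / 2 \<le> Re (qform y v)"
      using approx[OF d] by blast
    have "y \<in> S" unfolding S_def using y closure_subset by blast
    then have "g y \<le> g \<tau>" by (rule tmax)
    moreover have "1 - \<epsilon> - (1 - \<epsilon> - g \<tau>) / 2 = g \<tau> + (1 - \<epsilon> - g \<tau>) / 2" by (simp add: field_simps)
    ultimately show False using y(3) d unfolding g_def by linarith
  qed
  moreover have dt: "density \<tau>" and "\<tau> \<in> closure (outs F F' \<rho>)" using tS S_def by auto
  moreover have "fidelity \<tau> (outer v) = g \<tau>" unfolding g_def by (rule fidelity_pure[OF dt v])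
  ultimately show ?thesis unfolding prob_transform_outs by auto
qed

theorem theorem6:
  fixes F :: "(complex^'n^'n) set" and F' :: "(complex^'m^'m) set"
    and \<rho> :: "complex^'n^'n" and \<phi> :: "complex^'m^'m"
  assumes "free_set F" and "free_set F'"
    and "density \<rho>"
    and "pure_state \<phi>" and "\<phi> \<notin> F'"
  shows "(\<forall>\<epsilon>::real. ereal \<epsilon> \<ge> eps_threshold (Omega F \<rho>) (std_robustness F' \<phi>) \<longrightarrow>
            (\<exists>\<tau>. density \<tau> \<and> prob_transform F F' \<rho> \<tau> \<and> fidelity \<tau> \<phi> \<ge> 1 - \<epsilon>))
       \<and> (affine_free F \<and> affine_free F' \<longrightarrow>
          (\<forall>\<epsilon>::real. ereal \<epsilon> \<ge> eps_threshold (Omega F \<rho>) (gen_robustness F' \<phi>) \<longrightarrow>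
            (\<exists>\<tau>. density \<tau> \<and> prob_transform F F' \<rho> \<tau> \<and> fidelity \<tau> \<phi> \<ge> 1 - \<epsilon>)))"
proof -
  note fF = assms(1) and fF' = assms(2) and r = assms(3)
  obtain v where pv: "\<phi> = outer v" using assms(4) unfolding pure_state_def by blast
  have dp: "density \<phi>" using assms(4) unfolding pure_state_def by blast
  have v: "cinner v v = 1" using dp unfolding pv density_def trace_outer by blast
  have P1: "\<forall>\<epsilon>::real. ereal \<epsilon> \<ge> eps_threshold (Omega F \<rho>) (std_robustness F' \<phi>) \<longrightarrow>
            (\<exists>\<tau>. density \<tau> \<and> prob_transform F F' \<rho> \<tau> \<and> fidelity \<tau> \<phi> \<ge> 1 - \<epsilon>)"
  proof (intro allI impI)
    fix \<epsilon> :: real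
    assume e: "ereal \<epsilon> \<ge> eps_threshold (Omega F \<rho>) (std_robustness F' \<phi>)"
    show "\<exists>\<tau>. density \<tau> \<and> prob_transform F F' \<rho> \<tau> \<and> fidelity \<tau> \<phi> \<ge> 1 - \<epsilon>"
      unfolding pv
    proof (rule main_generic[OF fF fF' r v])
      show "std_robustness F' (outer v) \<ge> 1" using std_ge1[OF fF' dp] pv by simp
      show "ereal \<epsilon> \<ge> eps_threshold (Omega F \<rho>) (std_robustness F' (outer v))" using e pv by simp
      fix K R' assume "0 \<le> K" "ereal K < Omega F \<rho>" "std_robustness F' (outer v) < ereal R'"
      then show "\<exists>\<tau>\<in>outs F F' \<rho>. density \<tau> \<and> K / (K + (R' - 1)) \<le> Re (qform \<tau> v)"
        by (rule key1[OF fF fF' r v])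
    qed
  qed
  have P2: "affine_free F \<and> affine_free F' \<longrightarrow>
          (\<forall>\<epsilon>::real. ereal \<epsilon> \<ge> eps_threshold (Omega F \<rho>) (gen_robustness F' \<phi>) \<longrightarrow>
            (\<exists>\<tau>. density \<tau> \<and> prob_transform F F' \<rho> \<tau> \<and> fidelity \<tau> \<phi> \<ge> 1 - \<epsilon>))"
  proof (intro impI allI)
    fix \<epsilon> :: real
    assume aff: "affine_free F \<and> affine_free F'"
      and e: "ereal \<epsilon> \<ge> eps_threshold (Omega F \<rho>) (gen_robustness F' \<phi>)"
    have aF: "affine_free F" using aff by blast
    show "\<exists>\<tau>. density \<tau> \<and> prob_transform F F' \<rho> \<tau> \<and> fidelity \<tau> \<phi> \<ge> 1 - \<epsilon>"
      unfolding pv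
    proof (rule main_generic[OF fF fF' r v])
      show "gen_robustness F' (outer v) \<ge> 1" using gen_ge1[OF fF' dp] pv by simp
      show "ereal \<epsilon> \<ge> eps_threshold (Omega F \<rho>) (gen_robustness F' (outer v))" using e pv by simp
      fix K R' assume "0 \<le> K" "ereal K < Omega F \<rho>" "gen_robustness F' (outer v) < ereal R'"
      then show "\<exists>\<tau>\<in>outs F F' \<rho>. density \<tau> \<and> K / (K + (R' - 1)) \<le> Re (qform \<tau> v)"
        by (rule key2[OF fF fF' r v aF])
    qed
  qed
  show ?thesis using P1 P2 by blast
qed

end
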